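(* Assume (H1). (i) For every $c>0$ there exists $\gamma>0$ such that, for $n$ large enough, $$\mathbb{P}_n\big(\exists(k,j)\in I_K,\ u\in\mathbf{T}\setminus\{\emptyset\}:\ |A_{u,k,j}-\mu_k|u||\ge\gamma\sqrt{|u|\log n}\big)\le n^{-c}.$$ (ii) For every $c>0$ there exists $\gamma>0$ such that, for $n$ large enough, $$\mathbb{P}_n\big(\exists(k,j)\in I_K,\ u\in\mathbf{T},\ l\in(0,|u|]:\ |A_{u,l,k,j}-\mu_kl|\ge\gamma\sqrt{l\log n}\big)\le n^{-c}.$$
   Context: Planar trees: finite subsets $T$ of the set of finite words over $\{1,2,\dots\}$ containing the empty word $\emptyset$, with $ui\in T\Rightarrow u\in T$ and $uj\in T$ for $1\le j\le i$. $c_u(T)$ = number of children, $|u|$ = word length (depth), $d$ = graph distance; $v$ is an ancestor of $u$ if $v$ is a prefix of $u$. (H1): $\mu=(\mu_k)_{k\ge0}$ probability on $\mathbb{N}$ with $\mu_0+\mu_1\ne1$, $\sum_kk\mu_k=1$, $\sum_{k\le K}\mu_k=1$ for some integer $K>0$. $\mathbf{T}$ is a Galton–Watson tree with offspring law $\mu$ and $\mathbb{P}_n=\mathbb{P}(\cdot\mid|\mathbf{T}|=n+1)$, for $n$ with positive conditioning probability. $I_K=\{(k,j):1\le j\le k\le K\}$. $A_{u,k,j}$ is the number of strict ancestors $v$ of $u$ with $c_v=k$ such that $u$ is a descendant of (or equal to) $vj$. For $l\in\{0,\dots,|u|\}$, $A_{u,l,k,j}$ is the number of such strict ancestors $v$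 (with $c_v=k$, $u$ descending from $vj$) that additionally satisfy $d(u,v)\le l$. *)

theory Defs
  imports Complex_Main
begin

definition planar_tree :: "nat list set \<Rightarrow> bool" where
  "planar_tree T \<longleftrightarrow> finite T \<and> [] \<in> T \<and> (\<forall>u\<in>T. \<forall>i\<in>set u. 1 \<le> i) \<and>
     (\<forall>u i. u @ [i] \<in> T \<longrightarrow> u \<in> T \<and> (\<forall>j. 1 \<le> j \<and> j \<le> i \<longrightarrow> u @ [j] \<in> T))"

definition nchildren :: "nat list set \<Rightarrow> nat list \<Rightarrow> nat" where
  "nchildren T u = card {i. u @ [i] \<in> T}"

text \<open>Galton--Watson probability of a given planar tree: P(T = t) = prod over u in t of mu(c_u(t)).\<close>
definition gw_weight :: "(nat \<Rightarrow> real) \<Rightarrow> nat list set \<Rightarrow> real" where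
  "gw_weight \<mu> T = (\<Prod>u\<in>T. \<mu> (nchildren T u))"

definition trees_of_size :: "nat \<Rightarrow> nat list set set" where
  "trees_of_size m = {T. planar_tree T \<and> card T = m}"

text \<open>P(|T| = n+1), the conditioning probability.\<close>
definition gw_size_prob :: "(nat \<Rightarrow> real) \<Rightarrow> nat \<Rightarrow> real" where
  "gw_size_prob \<mu> n = (\<Sum>T\<in>trees_of_size (Suc n). gw_weight \<mu> T)"

text \<open>P_n(E) = P(T \<in> E | |T| = n+1).\<close>
definition cond_prob :: "(nat \<Rightarrow> real) \<Rightarrow> nat \<Rightarrow> (nat list set \<Rightarrow> bool) \<Rightarrow> real" where
  "cond_prob \<mu> n E =
     (\<Sum>T\<in>{T\<in>trees_of_size (Suc n). E T}. gw_weight \<mu> T) / gw_size_prob \<mu> n"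

definition A_count :: "nat list set \<Rightarrow> nat list \<Rightarrow> nat \<Rightarrow> nat \<Rightarrow> nat" where
  "A_count T u k j = card {v. v \<in> T \<and> nchildren T v = k \<and> (\<exists>w. u = v @ j # w)}"

text \<open>A_{u,l,k,j}: same, with additionally d(u,v) \<le> l; for an ancestor v of u,
  the graph distance is d(u,v) = |u| - |v|.\<close>
definition A_count_l :: "nat list set \<Rightarrow> nat list \<Rightarrow> nat \<Rightarrow> nat \<Rightarrow> nat \<Rightarrow> nat" where
  "A_count_l T u l k j = card {v. v \<in> T \<and> nchildren T v = k \<and> (\<exists>w. u = v @ j # w)
                                 \<and> length u - length v \<le> l}"

definition H1 :: "(nat \<Rightarrow> real) \<Rightarrow> nat \<Rightarrow> bool" where
  "H1 \<mu> K \<longleftrightarrow> 0 < K \<and> (\<forall>k. 0 \<le> \<mu> k) \<and> (\<forall>k>K. \<mu> k = 0) \<and> (\<Sum>k\<le>K. \<mu> k) = 1 \<and>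
     \<mu> 0 + \<mu> 1 \<noteq> 1 \<and> (\<Sum>k\<le>K. real k * \<mu> k) = 1"

end

theory Submission
  imports Defs
begin


lemma planar_prefix:
  assumes "planar_tree T" "u \<in> T" shows "take t u \<in> T"
  using assms(2)
proof (induction u arbitrary: t rule: rev_induct)
  case Nil then show ?case by simp
next
  case (snoc x xs)
  have xs: "xs \<in> T" using assms(1) snoc.prems unfolding planar_tree_def by blast
  show ?case
  proof (cases "t \<le> length xs")
    case True then show ?thesis using snoc.IH[OF xs, of t] by simp
  next
    case False then show ?thesis using snoc.prems by simp
  qed
qed

lemma children_eq:
  assumes "planar_tree T" shows "{i. u @ [i] \<in> T} = {1..nchildren T u}"
proof -
  let ?A = "{i. u @ [i] \<in> T}"
  have fin: "finite ?A"
  proof -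
    have "inj_on (\<lambda>i. u @ [i]) ?A" by (auto simp: inj_on_def)
    moreover have "(\<lambda>i. u @ [i]) ` ?A \<subseteq> T" by auto
    ultimately show ?thesis using assms unfolding planar_tree_def
      by (meson finite_imageD finite_subset)
  qed
  show ?thesis
  proof (cases "?A = {}")
    case True then show ?thesis by (simp add: nchildren_def)
  next
    case False
    define m where "m = Max ?A"
    have mA: "m \<in> ?A" using fin False m_def Max_in by blast
    have "?A = {1..m}"
    proof
      show "?A \<subseteq> {1..m}"
      proof
        fix i assume i: "i \<in> ?A"
        then have "1 \<le> i" using assms unfolding planar_tree_def by fastforce
        moreover have "i \<le> m" using Max_ge[OF fin i] m_def by simp
        ultimately show "i \<in> {1..m}" by simp
      qed
      have "\<forall>j. 1 \<le> j \<and> j \<le> m \<longrightarrow> u @ [j] \<in> T"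
        using mA assms unfolding planar_tree_def by blast
      then show "{1..m} \<subseteq> ?A" by auto
    qed
    then show ?thesis by (simp add: nchildren_def)
  qed
qed

lemma child_iff:
  assumes "planar_tree T" shows "u @ [i] \<in> T \<longleftrightarrow> 1 \<le> i \<and> i \<le> nchildren T u"
  using children_eq[OF assms, of u] by (metis atLeastAtMost_iff mem_Collect_eq)

definition sub :: "nat list set \<Rightarrow> nat \<Rightarrow> nat list set" where
  "sub T i = {w. i # w \<in> T}"

definition build :: "nat list set list \<Rightarrow> nat list set" where
  "build ts = insert [] (\<Union>i<length ts. (\<lambda>w. Suc i # w) ` (ts ! i))"

lemma planar_sub:
  assumes "planar_tree T" "[i] \<in> T" shows "planar_tree (sub T i)"
proof -
  have "finite (sub T i)"
  proof -
    have "(\<lambda>w. i # w) ` sub T i \<subseteq> T" by (auto simp: sub_def)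
    then show ?thesis using assms(1) unfolding planar_tree_def
      by (meson finite_imageD finite_subset inj_onI list.inject)
  qed
  moreover have "[] \<in> sub T i" using assms by (simp add: sub_def)
  moreover have "\<forall>u\<in>sub T i. \<forall>j\<in>set u. 1 \<le> j" using assms(1) unfolding planar_tree_def sub_def by auto
  moreover have "\<forall>u j. u @ [j] \<in> sub T i \<longrightarrow> u \<in> sub T i \<and> (\<forall>l. 1 \<le> l \<and> l \<le> j \<longrightarrow> u @ [l] \<in> sub T i)"
  proof (intro allI impI)
    fix u j assume "u @ [j] \<in> sub T i"
    then have "(i # u) @ [j] \<in> T" by (simp add: sub_def)
    then have "i # u \<in> T \<and> (\<forall>l. 1 \<le> l \<and> l \<le> j \<longrightarrow> (i # u) @ [l] \<in> T)"
      using assms(1) unfolding planar_tree_def by blast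
    then show "u \<in> sub T i \<and> (\<forall>l. 1 \<le> l \<and> l \<le> j \<longrightarrow> u @ [l] \<in> sub T i)" by (simp add: sub_def)
  qed
  ultimately show ?thesis unfolding planar_tree_def by blast
qed

lemma build_decomp:
  assumes "planar_tree T"
  shows "T = build (map (\<lambda>i. sub T (Suc i)) [0..<nchildren T []])"
proof
  show "T \<subseteq> build (map (\<lambda>i. sub T (Suc i)) [0..<nchildren T []])"
  proof
    fix w assume w: "w \<in> T"
    show "w \<in> build (map (\<lambda>i. sub T (Suc i)) [0..<nchildren T []])"
    proof (cases w)
      case Nil then show ?thesis by (simp add: build_def)
    next
      case (Cons a w')
      have "take 1 w \<in> T" using planar_prefix[OF assms w] .
      then have "[] @ [a] \<in> T" using Cons by simp
      then have "1 \<le> a \<and> a \<le> nchildren T []" using child_iff[OF assms] by blast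
      then show ?thesis using Cons w
        by (auto simp: build_def sub_def intro!: bexI[of _ "a - 1"] image_eqI[of _ _ w'])
    qed
  qed
  show "build (map (\<lambda>i. sub T (Suc i)) [0..<nchildren T []]) \<subseteq> T"
    using assms unfolding planar_tree_def by (auto simp: build_def sub_def)
qed


lemma prod_list_map_nth: "prod_list (map f xs) = (\<Prod>i<length xs. f (xs ! i))"
  by (induction xs) (simp_all del: prod.lessThan_Suc add: prod.lessThan_Suc_shift)

lemma sum_list_map_nth: "sum_list (map f xs) = (\<Sum>i<length xs. f (xs ! i))"
  by (induction xs) (simp_all del: sum.lessThan_Suc add: sum.lessThan_Suc_shift)

lemma build_mem_Cons: "Suc i # w \<in> build ts \<longleftrightarrow> i < length ts \<and> w \<in> ts ! i"
  by (auto simp: build_def)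

lemma build_mem_Cons0: "0 # w \<notin> build ts"
  by (auto simp: build_def)

lemma build_mem: "u \<in> build ts \<longleftrightarrow> u = [] \<or> (\<exists>i w. u = Suc i # w \<and> i < length ts \<and> w \<in> ts ! i)"
  by (auto simp: build_def)

lemma build_planar:
  assumes "\<forall>t\<in>set ts. planar_tree t" shows "planar_tree (build ts)"
proof -
  have fin: "finite (build ts)" unfolding build_def
    using assms by (auto simp: planar_tree_def)
  have letters: "\<forall>u\<in>build ts. \<forall>j\<in>set u. 1 \<le> j"
  proof
    fix u assume "u \<in> build ts"
    then show "\<forall>j\<in>set u. 1 \<le> j" unfolding build_mem
      using assms nth_mem unfolding planar_tree_def by fastforce
  qed
  have cl: "\<forall>u i. u @ [i] \<in> build ts \<longrightarrow> u \<in> build ts \<and> (\<forall>j. 1 \<le> j \<and> j \<le> i \<longrightarrow> u @ [j] \<in> build ts)"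
  proof (intro allI impI)
    fix u i assume ui: "u @ [i] \<in> build ts"
    show "u \<in> build ts \<and> (\<forall>j. 1 \<le> j \<and> j \<le> i \<longrightarrow> u @ [j] \<in> build ts)"
    proof (cases u)
      case Nil
      then obtain i' where i': "i = Suc i'" "i' < length ts" "[] \<in> ts ! i'"
        using ui by (auto simp: build_mem)
      have "\<forall>j. 1 \<le> j \<and> j \<le> i \<longrightarrow> [j] \<in> build ts"
      proof (intro allI impI)
        fix j assume j: "1 \<le> j \<and> j \<le> i"
        then obtain j' where j': "j = Suc j'" by (cases j) auto
        have "j' < length ts" using j j' i' by simp
        then have "planar_tree (ts ! j')" using assms nth_mem by blast
        then have "[] \<in> ts ! j'" by (simp add: planar_tree_def)
        then show "[j] \<in> build ts" using j' \<open>j' < length ts\<close> by (simp add: build_mem_Cons)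
      qed
      then show ?thesis using Nil by (simp add: build_def)
    next
      case (Cons a u')
      then obtain a' where a': "a = Suc a'" "a' < length ts" "u' @ [i] \<in> ts ! a'"
        using ui by (auto simp: build_mem)
      have "planar_tree (ts ! a')" using assms nth_mem a' by blast
      then have "u' \<in> ts ! a' \<and> (\<forall>j. 1 \<le> j \<and> j \<le> i \<longrightarrow> u' @ [j] \<in> ts ! a')"
        using a' unfolding planar_tree_def by blast
      then show ?thesis using Cons a' by (simp add: build_mem_Cons)
    qed
  qed
  show ?thesis unfolding planar_tree_def using fin letters cl by (simp add: build_def)
qed

lemma sub_build: "i < length ts \<Longrightarrow> sub (build ts) (Suc i) = ts ! i"
  by (auto simp: sub_def build_mem_Cons)

lemma nchildren_build_root:
  assumes "\<forall>t\<in>set ts. [] \<in> t" shows "nchildren (build ts) [] = length ts"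
proof -
  have "{i. [] @ [i] \<in> build ts} = Suc ` {..<length ts}"
  proof
    show "{i. [] @ [i] \<in> build ts} \<subseteq> Suc ` {..<length ts}"
      by (auto simp: build_mem)
    show "Suc ` {..<length ts} \<subseteq> {i. [] @ [i] \<in> build ts}"
      using assms nth_mem by (fastforce simp: build_mem_Cons)
  qed
  then show ?thesis by (simp add: nchildren_def card_image)
qed

lemma nchildren_build_Cons:
  "i < length ts \<Longrightarrow> nchildren (build ts) (Suc i # w) = nchildren (ts ! i) w"
  by (simp add: nchildren_def build_mem_Cons)

lemma build_decomp_set:
  "build ts = insert [] (\<Union>i<length ts. (\<lambda>w. Suc i # w) ` (ts ! i))"
  by (simp add: build_def)

lemma card_build:
  assumes "\<forall>t\<in>set ts. finite t" shows "card (build ts) = Suc (sum_list (map card ts))"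
proof -
  have fin: "\<forall>i\<in>{..<length ts}. finite ((\<lambda>w. Suc i # w) ` (ts ! i))"
    using assms nth_mem by blast
  have disj: "\<forall>i\<in>{..<length ts}. \<forall>j\<in>{..<length ts}. i \<noteq> j \<longrightarrow>
      ((\<lambda>w. Suc i # w) ` (ts ! i)) \<inter> ((\<lambda>w. Suc j # w) ` (ts ! j)) = {}" by auto
  have "card (\<Union>i<length ts. (\<lambda>w. Suc i # w) ` (ts ! i)) = (\<Sum>i<length ts. card ((\<lambda>w. Suc i # w) ` (ts ! i)))"
    using card_UN_disjoint[OF _ fin disj] by simp
  also have "\<dots> = (\<Sum>i<length ts. card (ts ! i))"
    by (intro sum.cong refl card_image) (auto simp: inj_on_def)
  also have "\<dots> = sum_list (map card ts)"
    by (simp add: sum_list_map_nth)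
  finally have c: "card (\<Union>i<length ts. (\<lambda>w. Suc i # w) ` (ts ! i)) = sum_list (map card ts)" .
  have "finite (\<Union>i<length ts. (\<lambda>w. Suc i # w) ` (ts ! i))" using fin by blast
  moreover have "[] \<notin> (\<Union>i<length ts. (\<lambda>w. Suc i # w) ` (ts ! i))" by auto
  ultimately show ?thesis using c by (simp add: build_def)
qed

lemma weight_build:
  assumes "\<forall>t\<in>set ts. planar_tree t"
  shows "gw_weight \<mu> (build ts) = \<mu> (length ts) * prod_list (map (gw_weight \<mu>) ts)"
proof -
  have fin: "\<forall>i\<in>{..<length ts}. finite ((\<lambda>w. Suc i # w) ` (ts ! i))"
    using assms nth_mem unfolding planar_tree_def by blast
  have disj: "\<forall>i\<in>{..<length ts}. \<forall>j\<in>{..<length ts}. i \<noteq> j \<longrightarrow>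
      ((\<lambda>w. Suc i # w) ` (ts ! i)) \<inter> ((\<lambda>w. Suc j # w) ` (ts ! j)) = {}" by auto
  have rt: "nchildren (build ts) [] = length ts"
    using nchildren_build_root assms unfolding planar_tree_def by blast
  have "(\<Prod>u\<in>(\<Union>i<length ts. (\<lambda>w. Suc i # w) ` (ts ! i)). \<mu> (nchildren (build ts) u))
      = (\<Prod>i<length ts. \<Prod>u\<in>(\<lambda>w. Suc i # w) ` (ts ! i). \<mu> (nchildren (build ts) u))"
    using prod.UNION_disjoint[OF _ fin disj] by simp
  also have "\<dots> = (\<Prod>i<length ts. \<Prod>w\<in>ts ! i. \<mu> (nchildren (ts ! i) w))"
  proof (rule prod.cong[OF refl])
    fix i assume i: "i \<in> {..<length ts}"
    have "(\<Prod>u\<in>(\<lambda>w. Suc i # w) ` (ts ! i). \<mu> (nchildren (build ts) u))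
        = (\<Prod>w\<in>ts ! i. \<mu> (nchildren (build ts) (Suc i # w)))"
      by (subst prod.reindex) (auto simp: inj_on_def)
    also have "\<dots> = (\<Prod>w\<in>ts ! i. \<mu> (nchildren (ts ! i) w))"
      using i by (simp add: nchildren_build_Cons)
    finally show "(\<Prod>u\<in>(\<lambda>w. Suc i # w) ` (ts ! i). \<mu> (nchildren (build ts) u))
        = (\<Prod>w\<in>ts ! i. \<mu> (nchildren (ts ! i) w))" .
  qed
  also have "\<dots> = prod_list (map (gw_weight \<mu>) ts)"
    by (simp add: prod_list_map_nth gw_weight_def)
  finally have c: "(\<Prod>u\<in>(\<Union>i<length ts. (\<lambda>w. Suc i # w) ` (ts ! i)). \<mu> (nchildren (build ts) u))
     = prod_list (map (gw_weight \<mu>) ts)" .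
  have "finite (\<Union>i<length ts. (\<lambda>w. Suc i # w) ` (ts ! i))" using fin by blast
  moreover have "[] \<notin> (\<Union>i<length ts. (\<lambda>w. Suc i # w) ` (ts ! i))" by auto
  ultimately show ?thesis using c rt unfolding gw_weight_def build_def
    by (simp add: prod.insert)
qed

lemma build_inj:
  assumes "\<forall>t\<in>set ts. [] \<in> t" "\<forall>t\<in>set ts'. [] \<in> t" "build ts = build ts'"
  shows "ts = ts'"
proof -
  have l: "length ts = length ts'"
    using nchildren_build_root[OF assms(1)] nchildren_build_root[OF assms(2)] assms(3) by simp
  show ?thesis
  proof (rule nth_equalityI[OF l])
    fix i assume "i < length ts"
    then show "ts ! i = ts' ! i" using sub_build[of i ts] sub_build[of i ts'] l assms(3) by simp
  qed
qed

lemma planar_decomp: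
  assumes "planar_tree T"
  defines "ts \<equiv> map (\<lambda>i. sub T (Suc i)) [0..<nchildren T []]"
  shows "T = build ts" "\<forall>t\<in>set ts. planar_tree t" "length ts = nchildren T []"
proof -
  show "T = build ts" using build_decomp[OF assms(1)] ts_def by simp
  show "length ts = nchildren T []" by (simp add: ts_def)
  show "\<forall>t\<in>set ts. planar_tree t"
  proof
    fix t assume "t \<in> set ts"
    then obtain i where i: "i < nchildren T []" "t = sub T (Suc i)" by (auto simp: ts_def)
    have "[] @ [Suc i] \<in> T" using child_iff[OF assms(1), of "[]" "Suc i"] i by simp
    then show "planar_tree t" using planar_sub[OF assms(1)] i by simp
  qed
qed


definition Lk :: "'a set \<Rightarrow> nat \<Rightarrow> 'a list set" where
  "Lk A k = {xs. set xs \<subseteq> A \<and> length xs = k}"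

lemma Lk_0[simp]: "Lk A 0 = {[]}" by (auto simp: Lk_def)

lemma Lk_Suc: "Lk A (Suc k) = (\<lambda>(x,xs). x # xs) ` (A \<times> Lk A k)"
proof
  show "Lk A (Suc k) \<subseteq> (\<lambda>(x,xs). x # xs) ` (A \<times> Lk A k)"
  proof
    fix ys assume "ys \<in> Lk A (Suc k)"
    then obtain x xs where "ys = x # xs" "x \<in> A" "xs \<in> Lk A k"
      by (cases ys) (auto simp: Lk_def)
    then show "ys \<in> (\<lambda>(x,xs). x # xs) ` (A \<times> Lk A k)" by force
  qed
  show "(\<lambda>(x,xs). x # xs) ` (A \<times> Lk A k) \<subseteq> Lk A (Suc k)" by (auto simp: Lk_def)
qed

lemma finite_Lk: "finite A \<Longrightarrow> finite (Lk A k)"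
  unfolding Lk_def using finite_lists_length_eq by blast

lemma sum_Lk_Suc:
  assumes "finite A"
  shows "(\<Sum>ys\<in>Lk A (Suc k). F ys) = (\<Sum>x\<in>A. \<Sum>xs\<in>Lk A k. F (x # xs))"
proof -
  have "(\<Sum>ys\<in>Lk A (Suc k). F ys) = (\<Sum>p\<in>A \<times> Lk A k. F ((\<lambda>(x,xs). x # xs) p))"
    unfolding Lk_Suc by (subst sum.reindex) (auto simp: inj_on_def)
  also have "\<dots> = (\<Sum>x\<in>A. \<Sum>xs\<in>Lk A k. F (x # xs))"
    using sum.cartesian_product[where A=A and B="Lk A k" and g="\<lambda>x xs. F (x#xs)"] by (simp add: split_def)
  finally show ?thesis .
qed

lemma sum_Lk_prod:
  fixes f :: "'a \<Rightarrow> real"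
  assumes "finite A"
  shows "(\<Sum>xs\<in>Lk A k. prod_list (map f xs)) = (\<Sum>x\<in>A. f x) ^ k"
proof (induction k)
  case 0 then show ?case by simp
next
  case (Suc k)
  show ?case using Suc by (simp add: sum_Lk_Suc[OF assms] sum_distrib_left[symmetric] sum_distrib_right[symmetric])
qed

lemma sum_Lk_prod_nth:
  fixes f g :: "'a \<Rightarrow> real"
  assumes "finite A" "i < k"
  shows "(\<Sum>xs\<in>Lk A k. prod_list (map f xs) * g (xs ! i)) = (\<Sum>x\<in>A. f x) ^ (k - 1) * (\<Sum>x\<in>A. f x * g x)"
  using assms(2)
proof (induction k arbitrary: i)
  case 0 then show ?case by simp
next
  case (Suc k)
  show ?case
  proof (cases i)
    case 0
    have "(\<Sum>xs\<in>Lk A (Suc k). prod_list (map f xs) * g (xs ! i))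
        = (\<Sum>x\<in>A. \<Sum>xs\<in>Lk A k. (f x * g x) * prod_list (map f xs))"
      using 0 by (simp add: sum_Lk_Suc[OF assms(1)] algebra_simps)
    also have "\<dots> = (\<Sum>x\<in>A. f x * g x) * (\<Sum>x\<in>A. f x) ^ k"
      by (simp add: sum_distrib_left[symmetric] sum_distrib_right[symmetric] sum_Lk_prod[OF assms(1)])
    finally show ?thesis by simp
  next
    case (Suc i')
    then have i': "i' < k" using Suc.prems by simp
    have "(\<Sum>xs\<in>Lk A (Suc k). prod_list (map f xs) * g (xs ! i))
        = (\<Sum>x\<in>A. f x * (\<Sum>xs\<in>Lk A k. prod_list (map f xs) * g (xs ! i')))"
      using Suc by (simp add: sum_Lk_Suc[OF assms(1)] sum_distrib_left algebra_simps)
    also have "\<dots> = (\<Sum>x\<in>A. f x) * ((\<Sum>x\<in>A. f x) ^ (k - 1) * (\<Sum>x\<in>A. f x * g x))"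
      using Suc.IH[OF i'] by (simp add: sum_distrib_right)
    also have "\<dots> = (\<Sum>x\<in>A. f x) ^ (Suc k - 1) * (\<Sum>x\<in>A. f x * g x)"
      using i' by (cases k) auto
    finally show ?thesis .
  qed
qed

definition Tr :: "nat \<Rightarrow> nat \<Rightarrow> nat list set set" where
  "Tr K H = {T. planar_tree T \<and> (\<forall>u\<in>T. length u \<le> H \<and> set u \<subseteq> {..K})}"

lemma finite_Tr: "finite (Tr K H)"
proof -
  have "Tr K H \<subseteq> Pow {u. set u \<subseteq> {..K} \<and> length u \<le> H}" by (auto simp: Tr_def)
  moreover have "finite {u. set u \<subseteq> {..K} \<and> length u \<le> H}"
    by (rule finite_lists_length_le) simp
  ultimately show ?thesis by (meson finite_Pow_iff finite_subset)
qed

lemma Tr_0: "Tr K 0 = {{[]}}"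
proof
  show "Tr K 0 \<subseteq> {{[]}}" by (auto simp: Tr_def planar_tree_def)
  show "{{[]}} \<subseteq> Tr K 0" by (auto simp: Tr_def planar_tree_def)
qed

lemma Tr_planar: "T \<in> Tr K H \<Longrightarrow> planar_tree T" by (simp add: Tr_def)

lemma Tr_Suc: "Tr K (Suc H) = build ` (\<Union>k\<le>K. Lk (Tr K H) k)"
proof
  show "Tr K (Suc H) \<subseteq> build ` (\<Union>k\<le>K. Lk (Tr K H) k)"
  proof
    fix T assume T: "T \<in> Tr K (Suc H)"
    then have pl: "planar_tree T" by (simp add: Tr_def)
    define ts where "ts = map (\<lambda>i. sub T (Suc i)) [0..<nchildren T []]"
    note d = planar_decomp[OF pl, folded ts_def]
    have k: "nchildren T [] \<le> K"
    proof (cases "nchildren T [] = 0")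
      case False
      then have "[] @ [nchildren T []] \<in> T" using child_iff[OF pl, of "[]" "nchildren T []"] by simp
      then show ?thesis using T by (auto simp: Tr_def)
    qed simp
    have "set ts \<subseteq> Tr K H"
    proof
      fix t assume t: "t \<in> set ts"
      then obtain i where i: "t = sub T (Suc i)" by (auto simp: ts_def)
      show "t \<in> Tr K H" using d(2) t T unfolding Tr_def i sub_def by fastforce
    qed
    then have "ts \<in> Lk (Tr K H) (nchildren T [])" using d(3) by (simp add: Lk_def)
    then show "T \<in> build ` (\<Union>k\<le>K. Lk (Tr K H) k)" using d(1) k by blast
  qed
  show "build ` (\<Union>k\<le>K. Lk (Tr K H) k) \<subseteq> Tr K (Suc H)"
  proof
    fix T assume "T \<in> build ` (\<Union>k\<le>K. Lk (Tr K H) k)"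
    then obtain k ts where k: "k \<le> K" "ts \<in> Lk (Tr K H) k" "T = build ts" by blast
    have pl: "\<forall>t\<in>set ts. planar_tree t" using k(2) by (auto simp: Lk_def Tr_def)
    have "\<forall>u\<in>T. length u \<le> Suc H \<and> set u \<subseteq> {..K}"
    proof
      fix u assume "u \<in> T"
      then have "u = [] \<or> (\<exists>i w. u = Suc i # w \<and> i < length ts \<and> w \<in> ts ! i)"
        using k(3) build_mem by blast
      then show "length u \<le> Suc H \<and> set u \<subseteq> {..K}"
      proof
        assume "\<exists>i w. u = Suc i # w \<and> i < length ts \<and> w \<in> ts ! i"
        then obtain i w where iw: "u = Suc i # w" "i < length ts" "w \<in> ts ! i" by blast
        have "ts ! i \<in> Tr K H" using k(2) iw(2) nth_mem by (auto simp: Lk_def)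
        then show ?thesis using iw k(1,2) by (auto simp: Tr_def Lk_def)
      qed simp
    qed
    then show "T \<in> Tr K (Suc H)" using build_planar[OF pl] k(3) by (simp add: Tr_def)
  qed
qed

lemma sum_Tr_Suc:
  fixes F :: "nat list set \<Rightarrow> real"
  shows "(\<Sum>T\<in>Tr K (Suc H). F T) = (\<Sum>k\<le>K. \<Sum>ts\<in>Lk (Tr K H) k. F (build ts))"
proof -
  have inj: "inj_on build (\<Union>k\<le>K. Lk (Tr K H) k)"
  proof (rule inj_onI)
    fix ts ts' assume "ts \<in> (\<Union>k\<le>K. Lk (Tr K H) k)" "ts' \<in> (\<Union>k\<le>K. Lk (Tr K H) k)" "build ts = build ts'"
    then show "ts = ts'" using build_inj[of ts ts']
      by (auto simp: Lk_def Tr_def planar_tree_def)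
  qed
  have "(\<Sum>T\<in>Tr K (Suc H). F T) = (\<Sum>ts\<in>(\<Union>k\<le>K. Lk (Tr K H) k). F (build ts))"
    unfolding Tr_Suc by (subst sum.reindex[OF inj]) simp
  also have "\<dots> = (\<Sum>k\<le>K. \<Sum>ts\<in>Lk (Tr K H) k. F (build ts))"
    by (rule sum.UNION_disjoint) (simp_all add: finite_Lk finite_Tr, auto simp: Lk_def)
  finally show ?thesis .
qed


fun lsum :: "(nat \<Rightarrow> real) \<Rightarrow> nat \<Rightarrow> nat \<Rightarrow> ((nat \<times> nat) list \<Rightarrow> real) \<Rightarrow> real" where
  "lsum \<mu> K 0 B = B []"
| "lsum \<mu> K (Suc h) B = (\<Sum>k\<le>K. \<mu> k * (\<Sum>i<k. lsum \<mu> K h (\<lambda>s. B ((k, Suc i) # s))))"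

lemma lsum_nonneg:
  assumes "\<forall>k. 0 \<le> \<mu> k" "\<forall>s. 0 \<le> B s" shows "0 \<le> lsum \<mu> K h B"
  using assms(2)
proof (induction h arbitrary: B)
  case 0 then show ?case by simp
next
  case (Suc h) then show ?case using assms(1)
    by (simp add: sum_nonneg mult_nonneg_nonneg)
qed

lemma lsum_mono:
  assumes "\<forall>k. 0 \<le> \<mu> k" "\<forall>s. B s \<le> C s" shows "lsum \<mu> K h B \<le> lsum \<mu> K h C"
  using assms(2)
proof (induction h arbitrary: B C)
  case 0 then show ?case by simp
next
  case (Suc h)
  show ?case
    by (simp, intro sum_mono mult_left_mono, auto simp: assms(1) Suc)
qed

lemma lsum_cmult: "lsum \<mu> K h (\<lambda>s. c * B s) = c * lsum \<mu> K h B"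
  by (induction h arbitrary: B) (simp_all add: sum_distrib_left algebra_simps)

lemma lsum_add: "lsum \<mu> K h (\<lambda>s. B s + C s) = lsum \<mu> K h B + lsum \<mu> K h C"
  by (induction h arbitrary: B C) (simp_all add: sum.distrib algebra_simps)

lemma lsum_const:
  assumes "(\<Sum>k\<le>K. real k * \<mu> k) = 1" shows "lsum \<mu> K h (\<lambda>_. c) = c"
proof (induction h)
  case 0 then show ?case by simp
next
  case (Suc h)
  have "lsum \<mu> K (Suc h) (\<lambda>_. c) = (\<Sum>k\<le>K. real k * \<mu> k) * c"
    using Suc apply (simp add: algebra_simps) by (simp add: sum_distrib_left)
  then show ?case using assms by simp
qed

lemma lsum_drop:
  assumes "(\<Sum>k\<le>K. real k * \<mu> k) = 1"
  shows "lsum \<mu> K (a + b) (\<lambda>s. f (drop a s)) = lsum \<mu> K b f"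
proof (induction a)
  case 0 then show ?case by simp
next
  case (Suc a)
  have "lsum \<mu> K (Suc a + b) (\<lambda>s. f (drop (Suc a) s)) = (\<Sum>k\<le>K. real k * \<mu> k) * lsum \<mu> K b f"
    using Suc by (simp add: sum_distrib_left ac_simps)
  then show ?case using assms by simp
qed

lemma lsum_prod:
  "lsum \<mu> K h (\<lambda>s. prod_list (map g s)) = (\<Sum>k\<le>K. \<mu> k * (\<Sum>i<k. g (k, Suc i))) ^ h"
proof (induction h)
  case 0 then show ?case by simp
next
  case (Suc h)
  have "lsum \<mu> K (Suc h) (\<lambda>s. prod_list (map g s))
      = (\<Sum>k\<le>K. \<mu> k * (\<Sum>i<k. g (k, Suc i) * lsum \<mu> K h (\<lambda>s. prod_list (map g s))))"
    by (simp add: lsum_cmult)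
  also have "\<dots> = (\<Sum>k\<le>K. \<mu> k * (\<Sum>i<k. g (k, Suc i))) * lsum \<mu> K h (\<lambda>s. prod_list (map g s))"
    by (simp add: sum_distrib_left sum_distrib_right ac_simps)
  finally show ?case using Suc by simp
qed

lemma weight_nonneg: "\<forall>k. 0 \<le> \<mu> k \<Longrightarrow> 0 \<le> gw_weight \<mu> T"
  by (simp add: gw_weight_def prod_nonneg)

lemma mass_le_1:
  assumes "\<forall>k. 0 \<le> \<mu> k" "(\<Sum>k\<le>K. \<mu> k) \<le> 1"
  shows "(\<Sum>T\<in>Tr K H. gw_weight \<mu> T) \<le> 1"
proof (induction H)
  case 0
  have "nchildren {[]} [] = 0" by (simp add: nchildren_def)
  then have "gw_weight \<mu> {[]} = \<mu> 0" by (simp add: gw_weight_def)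
  moreover have "\<mu> 0 \<le> (\<Sum>k\<le>K. \<mu> k)" using assms(1) by (intro member_le_sum) auto
  ultimately show ?case using assms(2) by (simp add: Tr_0)
next
  case (Suc H)
  define m where "m = (\<Sum>T\<in>Tr K H. gw_weight \<mu> T)"
  have m0: "0 \<le> m" unfolding m_def using weight_nonneg[OF assms(1)] by (simp add: sum_nonneg)
  have m1: "m \<le> 1" using Suc m_def by simp
  have "(\<Sum>T\<in>Tr K (Suc H). gw_weight \<mu> T) = (\<Sum>k\<le>K. \<Sum>ts\<in>Lk (Tr K H) k. \<mu> k * prod_list (map (gw_weight \<mu>) ts))"
    unfolding sum_Tr_Suc
  proof (intro sum.cong refl)
    fix k ts assume "ts \<in> Lk (Tr K H) k"
    then have "\<forall>t\<in>set ts. planar_tree t" "length ts = k" by (auto simp: Lk_def Tr_def)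
    then show "gw_weight \<mu> (build ts) = \<mu> k * prod_list (map (gw_weight \<mu>) ts)"
      using weight_build by metis
  qed
  also have "\<dots> = (\<Sum>k\<le>K. \<mu> k * m ^ k)"
    by (simp add: sum_distrib_left[symmetric] sum_Lk_prod finite_Tr m_def)
  also have "\<dots> \<le> (\<Sum>k\<le>K. \<mu> k)"
    by (intro sum_mono) (simp add: assms(1) m0 m1 mult_left_le power_le_one)
  finally show ?case using assms(2) by simp
qed

definition pairs :: "nat list set \<Rightarrow> nat list \<Rightarrow> (nat \<times> nat) list" where
  "pairs T u = map (\<lambda>t. (nchildren T (take t u), u ! t)) [0..<length u]"

lemma pairs_build:
  assumes "i < length ts" "\<forall>t\<in>set ts. [] \<in> t"
  shows "pairs (build ts) (Suc i # w) = (length ts, Suc i) # pairs (ts ! i) w"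
proof -
  have u: "\<And>n. [0..<Suc n] = 0 # map Suc [0..<n]"
    by (metis map_Suc_upt upt_conv_Cons zero_less_Suc)
  have "[0..<length (Suc i # w)] = 0 # map Suc [0..<length w]"
    using u by simp
  then show ?thesis unfolding pairs_def
    using assms by (simp add: nchildren_build_root nchildren_build_Cons)
qed

lemma words_build:
  "{u \<in> build ts. length u = Suc h} = (\<Union>i<length ts. (\<lambda>w. Suc i # w) ` {w \<in> ts ! i. length w = h})"
  by (auto simp: build_def)


lemma sum_words_build:
  assumes "\<forall>t\<in>set ts. planar_tree t"
  shows "(\<Sum>u\<in>{u \<in> build ts. length u = Suc h}. B (pairs (build ts) u))
    = (\<Sum>i<length ts. \<Sum>w\<in>{w \<in> ts ! i. length w = h}. B ((length ts, Suc i) # pairs (ts ! i) w))"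
proof -
  have fin: "\<forall>i\<in>{..<length ts}. finite ((\<lambda>w. Suc i # w) ` {w \<in> ts ! i. length w = h})"
  proof
    fix i assume "i \<in> {..<length ts}"
    then have "finite (ts ! i)" using assms nth_mem unfolding planar_tree_def by auto
    then show "finite ((\<lambda>w. Suc i # w) ` {w \<in> ts ! i. length w = h})" by simp
  qed
  have disj: "\<forall>i\<in>{..<length ts}. \<forall>j\<in>{..<length ts}. i \<noteq> j \<longrightarrow>
      ((\<lambda>w. Suc i # w) ` {w \<in> ts ! i. length w = h}) \<inter> ((\<lambda>w. Suc j # w) ` {w \<in> ts ! j. length w = h}) = {}" by auto
  have e: "\<forall>t\<in>set ts. [] \<in> t" using assms unfolding planar_tree_def by blast
  have "(\<Sum>u\<in>{u \<in> build ts. length u = Suc h}. B (pairs (build ts) u))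
     = (\<Sum>i<length ts. \<Sum>u\<in>(\<lambda>w. Suc i # w) ` {w \<in> ts ! i. length w = h}. B (pairs (build ts) u))"
    unfolding words_build using sum.UNION_disjoint[OF _ fin disj] by simp
  also have "\<dots> = (\<Sum>i<length ts. \<Sum>w\<in>{w \<in> ts ! i. length w = h}. B ((length ts, Suc i) # pairs (ts ! i) w))"
  proof (rule sum.cong[OF refl])
    fix i assume i: "i \<in> {..<length ts}"
    show "(\<Sum>u\<in>(\<lambda>w. Suc i # w) ` {w \<in> ts ! i. length w = h}. B (pairs (build ts) u))
      = (\<Sum>w\<in>{w \<in> ts ! i. length w = h}. B ((length ts, Suc i) # pairs (ts ! i) w))"
      using i by (subst sum.reindex) (auto simp: inj_on_def pairs_build[OF _ e] intro!: sum.cong)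
  qed
  finally show ?thesis .
qed

lemma spine:
  assumes mu: "\<forall>k. 0 \<le> \<mu> k" "(\<Sum>k\<le>K. \<mu> k) \<le> 1" and B: "\<forall>s. 0 \<le> B s"
  shows "(\<Sum>T\<in>Tr K H. gw_weight \<mu> T * (\<Sum>u\<in>{u \<in> T. length u = h}. B (pairs T u))) \<le> lsum \<mu> K h B"
  using B
proof (induction h arbitrary: H B)
  case 0
  have "(\<Sum>T\<in>Tr K H. gw_weight \<mu> T * (\<Sum>u\<in>{u \<in> T. length u = 0}. B (pairs T u)))
      = (\<Sum>T\<in>Tr K H. gw_weight \<mu> T) * B []"
  proof -
    have "\<And>T. T \<in> Tr K H \<Longrightarrow> {u \<in> T. length u = 0} = {[]}"
      by (auto simp: Tr_def planar_tree_def)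
    then show ?thesis by (simp add: sum_distrib_right pairs_def)
  qed
  also have "\<dots> \<le> 1 * B []"
    using mass_le_1[OF mu, of H] 0 by (intro mult_right_mono) auto
  finally show ?case by simp
next
  case (Suc h)
  show ?case
  proof (cases H)
    case 0
    have e: "\<And>T. T \<in> Tr K H \<Longrightarrow> {u \<in> T. length u = Suc h} = {}"
      using 0 by (auto simp: Tr_def)
    have "\<forall>T\<in>Tr K H. gw_weight \<mu> T * (\<Sum>u\<in>{u \<in> T. length u = Suc h}. B (pairs T u)) = 0"
      using e by (metis sum.empty mult_zero_right)
    then have "(\<Sum>T\<in>Tr K H. gw_weight \<mu> T * (\<Sum>u\<in>{u \<in> T. length u = Suc h}. B (pairs T u))) = 0"
      by (rule sum.neutral)
    then show ?thesis using lsum_nonneg[OF mu(1) Suc.prems, of K "Suc h"] by linarith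
  next
    case (Suc H')
    define m where "m = (\<Sum>T\<in>Tr K H'. gw_weight \<mu> T)"
    have m0: "0 \<le> m" unfolding m_def using weight_nonneg[OF mu(1)] by (simp add: sum_nonneg)
    have m1: "m \<le> 1" using mass_le_1[OF mu] m_def by simp
    define G where "G k i S = (\<Sum>w\<in>{w \<in> S. length w = h}. B ((k, Suc i) # pairs S w))" for k i S
    have G0: "0 \<le> G k i S" for k i S unfolding G_def using Suc.prems by (simp add: sum_nonneg)
    have "(\<Sum>T\<in>Tr K H. gw_weight \<mu> T * (\<Sum>u\<in>{u \<in> T. length u = Suc h}. B (pairs T u)))
      = (\<Sum>k\<le>K. \<Sum>ts\<in>Lk (Tr K H') k. \<mu> k * (\<Sum>i<k. prod_list (map (gw_weight \<mu>) ts) * G k i (ts ! i)))"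
      unfolding Suc sum_Tr_Suc
    proof (intro sum.cong refl)
      fix k ts assume "ts \<in> Lk (Tr K H') k"
      then have pl: "\<forall>t\<in>set ts. planar_tree t" and l: "length ts = k" by (auto simp: Lk_def Tr_def)
      show "gw_weight \<mu> (build ts) * (\<Sum>u\<in>{u \<in> build ts. length u = Suc h}. B (pairs (build ts) u))
        = \<mu> k * (\<Sum>i<k. prod_list (map (gw_weight \<mu>) ts) * G k i (ts ! i))"
        unfolding sum_words_build[OF pl] weight_build[OF pl] l G_def
        by (simp add: sum_distrib_left mult.assoc)
    qed
    also have "\<dots> = (\<Sum>k\<le>K. \<mu> k * (\<Sum>i<k. m ^ (k - 1) * (\<Sum>S\<in>Tr K H'. gw_weight \<mu> S * G k i S)))"
    proof (rule sum.cong[OF refl])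
      fix k assume "k \<in> {..K}"
      have "(\<Sum>ts\<in>Lk (Tr K H') k. \<mu> k * (\<Sum>i<k. prod_list (map (gw_weight \<mu>) ts) * G k i (ts ! i)))
          = \<mu> k * (\<Sum>i<k. \<Sum>ts\<in>Lk (Tr K H') k. prod_list (map (gw_weight \<mu>) ts) * G k i (ts ! i))"
        by (simp add: sum_distrib_left sum.swap[of _ "{..<k}"])
      also have "\<dots> = \<mu> k * (\<Sum>i<k. m ^ (k - 1) * (\<Sum>S\<in>Tr K H'. gw_weight \<mu> S * G k i S))"
        by (simp add: sum_Lk_prod_nth finite_Tr m_def)
      finally show "(\<Sum>ts\<in>Lk (Tr K H') k. \<mu> k * (\<Sum>i<k. prod_list (map (gw_weight \<mu>) ts) * G k i (ts ! i)))
          = \<mu> k * (\<Sum>i<k. m ^ (k - 1) * (\<Sum>S\<in>Tr K H'. gw_weight \<mu> S * G k i S))" .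
    qed
    also have "\<dots> \<le> (\<Sum>k\<le>K. \<mu> k * (\<Sum>i<k. lsum \<mu> K h (\<lambda>s. B ((k, Suc i) # s))))"
    proof (intro sum_mono mult_left_mono)
      fix k i
      have a: "(\<Sum>S\<in>Tr K H'. gw_weight \<mu> S * G k i S) \<le> lsum \<mu> K h (\<lambda>s. B ((k, Suc i) # s))"
        using Suc.IH[of "\<lambda>s. B ((k, Suc i) # s)" H'] Suc.prems unfolding G_def by simp
      have b: "0 \<le> (\<Sum>S\<in>Tr K H'. gw_weight \<mu> S * G k i S)"
        using G0 weight_nonneg[OF mu(1)] by (simp add: sum_nonneg)
      have "m ^ (k - 1) * (\<Sum>S\<in>Tr K H'. gw_weight \<mu> S * G k i S) \<le> 1 * (\<Sum>S\<in>Tr K H'. gw_weight \<mu> S * G k i S)"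
        using b m0 m1 by (intro mult_right_mono power_le_one) auto
      then show "m ^ (k - 1) * (\<Sum>S\<in>Tr K H'. gw_weight \<mu> S * G k i S) \<le> lsum \<mu> K h (\<lambda>s. B ((k, Suc i) # s))"
        using a by simp
    qed (simp add: mu)
    finally show ?thesis by simp
  qed
qed


lemma lsum_mono_len:
  assumes "\<forall>k. 0 \<le> \<mu> k" "\<forall>s. length s = h \<longrightarrow> B s \<le> C s" shows "lsum \<mu> K h B \<le> lsum \<mu> K h C"
  using assms(2)
proof (induction h arbitrary: B C)
  case 0 then show ?case by simp
next
  case (Suc h)
  show ?case
    by (simp, intro sum_mono mult_left_mono, auto simp: assms(1) Suc)
qed

lemma lsum_cong_len:
  assumes "\<forall>s. length s = h \<longrightarrow> B s = C s" shows "lsum \<mu> K h B = lsum \<mu> K h C"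
  using assms
proof (induction h arbitrary: B C)
  case 0 then show ?case by simp
next
  case (Suc h)
  show ?case by (simp, intro sum.cong refl arg_cong[where f="\<lambda>x. _ * x"], auto simp: Suc)
qed

lemma exp_le_quad:
  fixes x :: real assumes "\<bar>x\<bar> \<le> 1" shows "exp x \<le> 1 + x + x\<^sup>2"
proof (cases "0 \<le> x")
  case True then show ?thesis using exp_bound assms by auto
next
  case False
  have p: "0 < 1 - x" using False by simp
  have "1 - x \<le> exp (-x)" using exp_ge_add_one_self[of "-x"] by simp
  then have "exp x * (1 - x) \<le> exp x * exp (-x)" by (intro mult_left_mono) auto
  then have a: "exp x * (1 - x) \<le> 1" by (simp add: exp_minus)
  have "(1 + x + x\<^sup>2) * (1 - x) = 1 - x ^ 3" by (simp add: power2_eq_square power3_eq_cube algebra_simps)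
  also have "\<dots> \<ge> 1"
  proof -
    have "0 \<le> x * x" by simp
    then have "x * x * x \<le> 0" using False by (simp add: mult_nonneg_nonpos)
    then show ?thesis by (simp add: power3_eq_cube)
  qed
  finally have "exp x * (1 - x) \<le> (1 + x + x\<^sup>2) * (1 - x)" using a by linarith
  then show ?thesis using p by simp
qed

lemma pair_sum:
  fixes a b :: real
  assumes "(\<Sum>k\<le>K. real k * \<mu> k) = 1" "1 \<le> j0" "j0 \<le> k0" "k0 \<le> K"
  shows "(\<Sum>k\<le>K. \<mu> k * (\<Sum>i<k. a + (if (k, Suc i) = (k0, j0) then b else 0))) = a + \<mu> k0 * b"
proof -
  have inner: "(\<Sum>i<k. (if (k, Suc i) = (k0, j0) then b else 0)) = (if k = k0 then b else 0)" for k
  proof (cases "k = k0")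
    case True
    have "(\<Sum>i<k. (if (k, Suc i) = (k0, j0) then b else 0)) = (\<Sum>i<k. (if i = j0 - 1 then b else 0))"
      using True assms(2) by (intro sum.cong refl) auto
    also have "\<dots> = b" using True assms(2,3) by auto
    finally show ?thesis using True by simp
  qed simp
  have "(\<Sum>k\<le>K. \<mu> k * (\<Sum>i<k. a + (if (k, Suc i) = (k0, j0) then b else 0)))
      = (\<Sum>k\<le>K. \<mu> k * (real k * a + (if k = k0 then b else 0)))"
    by (intro sum.cong refl) (simp only: sum.distrib inner, simp)
  also have "\<dots> = (\<Sum>k\<le>K. real k * \<mu> k) * a + (\<Sum>k\<le>K. \<mu> k * (if k = k0 then b else 0))"
    apply (simp add: distrib_left sum.distrib sum_distrib_right mult.commute mult.left_commute)
    by (simp add: sum_distrib_left)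
  also have "(\<Sum>k\<le>K. \<mu> k * (if k = k0 then b else 0)) = \<mu> k0 * b"
    using assms(4) by (simp add: if_distrib cong: if_cong)
  finally show ?thesis using assms(1) by simp
qed

definition cnt :: "nat \<times> nat \<Rightarrow> (nat \<times> nat) list \<Rightarrow> nat" where
  "cnt p s = length (filter (\<lambda>x. x = p) s)"

lemma exp_cnt:
  "exp (l * (real (cnt p s) - q * real (length s))) = prod_list (map (\<lambda>x. exp (l * ((if x = p then 1 else 0) - q))) s)"
proof (induction s)
  case Nil then show ?case by (simp add: cnt_def)
next
  case (Cons x s)
  have "l * (real (cnt p (x # s)) - q * real (length (x # s)))
      = l * ((if x = p then 1 else 0) - q) + l * (real (cnt p s) - q * real (length s))"
    by (simp add: cnt_def algebra_simps)
  then show ?case using Cons by (simp add: exp_add)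
qed

lemma cnt_le: "cnt p s \<le> length s" by (simp add: cnt_def)

lemma chernoff:
  assumes mu: "\<forall>k. 0 \<le> \<mu> k" "(\<Sum>k\<le>K. real k * \<mu> k) = 1"
    and p: "1 \<le> j0" "j0 \<le> k0" "k0 \<le> K" and h: "1 \<le> h" and t: "0 < t"
  shows "lsum \<mu> K h (\<lambda>s. if t \<le> \<bar>real (cnt (k0, j0) s) - \<mu> k0 * real h\<bar> then 1 else 0)
     \<le> 2 * exp (- (t\<^sup>2 / (4 * real h)))"
proof -
  define q where "q = \<mu> k0"
  have q0: "0 \<le> q" using mu q_def by simp
  have q1: "q \<le> 1"
  proof -
    have "real k0 * \<mu> k0 \<le> (\<Sum>k\<le>K. real k * \<mu> k)"
      using mu(1) p by (intro member_le_sum) auto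
    moreover have "1 * \<mu> k0 \<le> real k0 * \<mu> k0"
      by (rule mult_right_mono) (use p mu(1) in auto)
    ultimately show ?thesis using mu(2) q_def by simp
  qed
  let ?B = "\<lambda>s. if t \<le> \<bar>real (cnt (k0, j0) s) - \<mu> k0 * real h\<bar> then 1 else (0::real)"
  have hpos: "0 < real h" using h by simp
  show ?thesis
  proof (cases "2 * real h < t")
    case True
    have "\<forall>s. length s = h \<longrightarrow> ?B s \<le> 0"
    proof (intro allI impI)
      fix s :: "(nat \<times> nat) list" assume "length s = h"
      then have "real (cnt (k0, j0) s) \<le> real h" using cnt_le[of "(k0,j0)" s] by simp
      moreover have "\<mu> k0 * real h \<le> real h" using q1 q_def hpos by (simp add: mult_le_cancel_right1)
      moreover have "0 \<le> \<mu> k0 * real h" using q0 q_def by simp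
      ultimately have "\<bar>real (cnt (k0, j0) s) - \<mu> k0 * real h\<bar> < t" using True by linarith
      then show "?B s \<le> 0" by simp
    qed
    then have "lsum \<mu> K h ?B \<le> lsum \<mu> K h (\<lambda>_. 0)" by (rule lsum_mono_len[OF mu(1)])
    also have "\<dots> = 0" using lsum_const[OF mu(2)] by simp
    finally show ?thesis by (smt (verit) exp_gt_zero)
  next
    case False
    define l where "l = t / (2 * real h)"
    have l0: "0 < l" using t hpos l_def by simp
    have l1: "l \<le> 1" using False hpos l_def by simp
    define Y where "Y s = real (cnt (k0, j0) s) - q * real (length s)" for s
    have key: "?B s \<le> exp (l * Y s - l * t) + exp ((- l) * Y s - l * t)" if "length s = h" for s
    proof (cases "t \<le> \<bar>real (cnt (k0, j0) s) - \<mu> k0 * real h\<bar>")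
      case True
      then have "t \<le> Y s \<or> t \<le> - Y s" using that unfolding Y_def q_def by (smt (verit))
      then have "l * t \<le> l * Y s \<or> l * t \<le> l * (- Y s)"
      proof
        assume "t \<le> Y s" then show ?thesis using l0 mult_left_mono[of t "Y s" l] by simp
      next
        assume "t \<le> - Y s" then show ?thesis using l0 mult_left_mono[of t "- Y s" l] by simp
      qed
      then have "1 \<le> exp (l * Y s - l * t) \<or> 1 \<le> exp ((- l) * Y s - l * t)"
        by auto
      then show ?thesis using True by (smt (verit) exp_gt_zero)
    next
      case False then show ?thesis by (smt (verit) exp_gt_zero)
    qed
    have mom: "lsum \<mu> K h (\<lambda>s. exp (l' * Y s - l * t)) \<le> exp (real h * l\<^sup>2 - l * t)"
      if l': "\<bar>l'\<bar> = l" for l'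
    proof -
      define M where "M = q * exp (l' * (1 - q)) + (1 - q) * exp (l' * (0 - q))"
      have "lsum \<mu> K h (\<lambda>s. exp (l' * Y s - l * t)) = exp (- l * t) * lsum \<mu> K h (\<lambda>s. exp (l' * Y s))"
        by (simp add: lsum_cmult[symmetric] exp_diff exp_minus field_simps)
      also have "lsum \<mu> K h (\<lambda>s. exp (l' * Y s)) = lsum \<mu> K h (\<lambda>s. prod_list (map (\<lambda>x. exp (l' * ((if x = (k0,j0) then 1 else 0) - q))) s))"
        unfolding Y_def exp_cnt by simp
      also have "\<dots> = (\<Sum>k\<le>K. \<mu> k * (\<Sum>i<k. exp (l' * ((if (k, Suc i) = (k0,j0) then 1 else 0) - q)))) ^ h"
        by (rule lsum_prod)
      also have "(\<Sum>k\<le>K. \<mu> k * (\<Sum>i<k. exp (l' * ((if (k, Suc i) = (k0,j0) then 1 else 0) - q))))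
          = (\<Sum>k\<le>K. \<mu> k * (\<Sum>i<k. exp (l' * (0 - q)) + (if (k, Suc i) = (k0,j0) then exp (l' * (1 - q)) - exp (l' * (0 - q)) else 0)))"
        by (intro sum.cong refl arg_cong[where f="\<lambda>x. _ * x"]) auto
      also have "\<dots> = M"
        unfolding pair_sum[OF mu(2) p] M_def q_def by (simp add: algebra_simps)
      finally have e1: "lsum \<mu> K h (\<lambda>s. exp (l' * Y s - l * t)) = exp (- l * t) * M ^ h" .
      have x1: "\<bar>l' * (1 - q)\<bar> \<le> 1" using l' l1 q0 q1 by (simp add: abs_mult mult_le_one)
      have x2: "\<bar>l' * (0 - q)\<bar> \<le> 1" using l' l1 q0 q1 by (simp add: abs_mult mult_le_one)
      have "M \<le> q * (1 + l' * (1 - q) + (l' * (1 - q))\<^sup>2) + (1 - q) * (1 + l' * (0 - q) + (l' * (0 - q))\<^sup>2)"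
        unfolding M_def using exp_le_quad[OF x1] exp_le_quad[OF x2] q0 q1
        by (intro add_mono mult_left_mono) auto
      also have "\<dots> = 1 + l'\<^sup>2 * (q * (1 - q))"
        by (simp add: power2_eq_square algebra_simps)
      also have "\<dots> \<le> 1 + l\<^sup>2"
      proof -
        have "q * (1 - q) \<le> 1" using q0 q1 by (simp add: mult_le_one)
        moreover have "l'\<^sup>2 = l\<^sup>2" using l' by (metis power2_abs)
        ultimately show ?thesis using q0 q1 by (simp add: mult_left_le)
      qed
      also have "\<dots> \<le> exp (l\<^sup>2)" using exp_ge_add_one_self[of "l\<^sup>2"] by simp
      finally have Mb: "M \<le> exp (l\<^sup>2)" .
      have M0: "0 \<le> M" unfolding M_def using q0 q1 by simp
      have "M ^ h \<le> exp (l\<^sup>2) ^ h" using Mb M0 by (rule power_mono)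
      also have "\<dots> = exp (real h * l\<^sup>2)" by (simp add: exp_of_nat_mult[symmetric])
      finally have "exp (- l * t) * M ^ h \<le> exp (- l * t) * exp (real h * l\<^sup>2)" by simp
      then show ?thesis using e1 by (simp add: exp_add[symmetric])
    qed
    have "lsum \<mu> K h ?B \<le> lsum \<mu> K h (\<lambda>s. exp (l * Y s - l * t) + exp ((- l) * Y s - l * t))"
      using key by (intro lsum_mono_len[OF mu(1)]) auto
    also have "\<dots> = lsum \<mu> K h (\<lambda>s. exp (l * Y s - l * t)) + lsum \<mu> K h (\<lambda>s. exp ((- l) * Y s - l * t))"
      by (rule lsum_add)
    also have "\<dots> \<le> exp (real h * l\<^sup>2 - l * t) + exp (real h * l\<^sup>2 - l * t)"
      using mom[of l] mom[of "-l"] l0 by (intro add_mono) auto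
    also have "real h * l\<^sup>2 - l * t = - (t\<^sup>2 / (4 * real h))"
      unfolding l_def using hpos by (simp add: power2_eq_square field_simps)
    finally show ?thesis by simp
  qed
qed


definition Fo :: "nat \<Rightarrow> nat \<Rightarrow> nat \<Rightarrow> nat list set list set" where
  "Fo K m N = {ts \<in> Lk (Tr K N) m. sum_list (map card ts) = N}"

definition Wf :: "(nat \<Rightarrow> real) \<Rightarrow> nat \<Rightarrow> nat \<Rightarrow> nat \<Rightarrow> real" where
  "Wf \<mu> K m N = (\<Sum>ts\<in>Fo K m N. prod_list (map (gw_weight \<mu>) ts))"

lemma finite_Fo: "finite (Fo K m N)"
  unfolding Fo_def using finite_Lk[OF finite_Tr] by simp

lemma Tr_mono: "H \<le> H' \<Longrightarrow> Tr K H \<subseteq> Tr K H'"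
  by (auto simp: Tr_def)

lemma Wf_nonneg: "\<forall>k. 0 \<le> \<mu> k \<Longrightarrow> 0 \<le> Wf \<mu> K m N"
  unfolding Wf_def by (intro sum_nonneg prod_list_nonneg) (auto simp: weight_nonneg)

lemma Wf_0_0: "Wf \<mu> K 0 0 = 1"
proof -
  have "Fo K 0 0 = {[]}" by (auto simp: Fo_def Lk_def)
  then show ?thesis by (simp add: Wf_def)
qed

lemma Wf_rec:
  assumes mu: "\<forall>k. 0 \<le> \<mu> k" and m: "1 \<le> m" and N: "N = Suc N'"
  shows "(\<Sum>k\<le>K. \<mu> k * Wf \<mu> K (m - 1 + k) N') \<le> Wf \<mu> K m N"
proof -
  define D where "D = Sigma {..K} (\<lambda>k. Fo K (m - 1 + k) N')"
  define \<phi> where "\<phi> = (\<lambda>(k, ts). build (take k ts) # drop k (ts :: nat list set list))"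
  have finD: "finite D" unfolding D_def by (simp add: finite_Fo)
  have plTr: "\<And>t H. t \<in> Tr K H \<Longrightarrow> planar_tree t" by (simp add: Tr_def)
  have e1: "(\<Sum>k\<le>K. \<mu> k * Wf \<mu> K (m - 1 + k) N') = (\<Sum>(k, ts)\<in>D. \<mu> k * prod_list (map (gw_weight \<mu>) ts))"
    unfolding D_def Wf_def by (subst sum.Sigma[symmetric]) (auto simp: finite_Fo sum_distrib_left)
  have e2: "\<mu> k * prod_list (map (gw_weight \<mu>) ts) = prod_list (map (gw_weight \<mu>) (\<phi> (k, ts)))"
    if "(k, ts) \<in> D" for k ts
  proof -
    from that have ts: "ts \<in> Fo K (m - 1 + k) N'" by (simp add: D_def)
    then have len: "length ts = m - 1 + k" and pl: "\<forall>t\<in>set ts. planar_tree t"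
      by (auto simp: Fo_def Lk_def dest: plTr)
    have pl': "\<forall>t\<in>set (take k ts). planar_tree t" using pl by (meson in_set_takeD)
    have lt: "length (take k ts) = k" using len by simp
    have "prod_list (map (gw_weight \<mu>) (\<phi> (k, ts)))
        = \<mu> k * prod_list (map (gw_weight \<mu>) (take k ts)) * prod_list (map (gw_weight \<mu>) (drop k ts))"
      unfolding \<phi>_def using weight_build[OF pl'] lt by simp
    also have "\<dots> = \<mu> k * prod_list (map (gw_weight \<mu>) ts)"
      by (simp add: mult.assoc prod_list.append[symmetric] map_append[symmetric] del: prod_list.append map_append)
    finally show ?thesis by simp
  qed
  have inj: "inj_on \<phi> D"
  proof (rule inj_onI)
    fix x y assume x: "x \<in> D" and y: "y \<in> D" and eq: "\<phi> x = \<phi> y"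
    obtain k ts where xk: "x = (k, ts)" by (cases x)
    obtain k' ts' where yk: "y = (k', ts')" by (cases y)
    have ts: "ts \<in> Fo K (m - 1 + k) N'" and ts': "ts' \<in> Fo K (m - 1 + k') N'"
      using x y xk yk by (auto simp: D_def)
    have lts: "length ts = m - 1 + k" "length ts' = m - 1 + k'" using ts ts' by (auto simp: Fo_def Lk_def)
    have e: "\<forall>t\<in>set ts. [] \<in> t" "\<forall>t\<in>set ts'. [] \<in> t" using ts ts'
      by (auto simp: Fo_def Lk_def Tr_def planar_tree_def)
    have b: "build (take k ts) = build (take k' ts')" and d: "drop k ts = drop k' ts'"
      using eq xk yk by (auto simp: \<phi>_def)
    have "take k ts = take k' ts'"
      using build_inj[OF _ _ b] e by (meson in_set_takeD)
    moreover have "length (take k ts) = k" "length (take k' ts') = k'" using lts by simp_all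
    ultimately have "k = k'" by simp
    then show "x = y" using xk yk d \<open>take k ts = take k' ts'\<close> by (metis append_take_drop_id)
  qed
  have sub: "\<phi> ` D \<subseteq> Fo K m N"
  proof
    fix y assume "y \<in> \<phi> ` D"
    then obtain k ts where kts: "(k, ts) \<in> D" "y = \<phi> (k, ts)" by auto
    have k: "k \<le> K" and ts: "ts \<in> Fo K (m - 1 + k) N'" using kts by (auto simp: D_def)
    have len: "length ts = m - 1 + k" and setts: "set ts \<subseteq> Tr K N'" and sc: "sum_list (map card ts) = N'"
      using ts by (auto simp: Fo_def Lk_def)
    have "take k ts \<in> Lk (Tr K N') k" using len setts by (auto simp: Lk_def dest: in_set_takeD)
    then have bt: "build (take k ts) \<in> Tr K N" using Tr_Suc[of K N'] k N by blast
    have "set (drop k ts) \<subseteq> Tr K N" using setts Tr_mono[of N' N K] N by (auto dest: in_set_dropD)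
    then have s1: "set y \<subseteq> Tr K N" using bt kts(2) by (auto simp: \<phi>_def)
    have l1: "length y = m" using kts(2) len m by (simp add: \<phi>_def)
    have fin: "\<forall>t\<in>set (take k ts). finite t" using setts
      by (auto simp: Tr_def planar_tree_def dest!: in_set_takeD)
    have "sum_list (map card y) = Suc (sum_list (map card (take k ts))) + sum_list (map card (drop k ts))"
      using kts(2) card_build[OF fin] by (simp add: \<phi>_def)
    also have "\<dots> = Suc N'" using sc by (metis add_Suc append_take_drop_id map_append sum_list_append)
    finally show "y \<in> Fo K m N" using s1 l1 N by (simp add: Fo_def Lk_def)
  qed
  have "(\<Sum>(k, ts)\<in>D. \<mu> k * prod_list (map (gw_weight \<mu>) ts)) = (\<Sum>x\<in>D. prod_list (map (gw_weight \<mu>) (\<phi> x)))"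
    using e2 by (intro sum.cong refl) auto
  also have "\<dots> = (\<Sum>y\<in>\<phi> ` D. prod_list (map (gw_weight \<mu>) y))"
    using sum.reindex[OF inj, of "\<lambda>y. prod_list (map (gw_weight \<mu>) y)"] by (simp add: comp_def)
  also have "\<dots> \<le> (\<Sum>y\<in>Fo K m N. prod_list (map (gw_weight \<mu>) y))"
    by (intro sum_mono2 finite_Fo sub prod_list_nonneg) (auto simp: weight_nonneg mu)
  finally show ?thesis using e1 by (simp add: Wf_def)
qed


definition Ty :: "nat \<Rightarrow> nat \<Rightarrow> (nat \<Rightarrow> nat) set" where
  "Ty K N = {c. (\<forall>k>K. c k = 0) \<and> (\<Sum>k\<le>K. c k) = N}"

definition mult :: "nat \<Rightarrow> nat \<Rightarrow> (nat \<Rightarrow> nat) \<Rightarrow> real" where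
  "mult K N c = fact N / (\<Prod>k\<le>K. fact (c k))"

definition pw :: "(nat \<Rightarrow> real) \<Rightarrow> nat \<Rightarrow> (nat \<Rightarrow> nat) \<Rightarrow> real" where
  "pw \<mu> K c = (\<Prod>k\<le>K. \<mu> k ^ c k)"

definition Qs :: "(nat \<Rightarrow> real) \<Rightarrow> nat \<Rightarrow> nat \<Rightarrow> nat \<Rightarrow> real" where
  "Qs \<mu> K m N = (\<Sum>c\<in>{c\<in>Ty K N. (\<Sum>k\<le>K. k * c k) + m = N}. mult K N c * pw \<mu> K c)"

lemma Ty_le: "c \<in> Ty K N \<Longrightarrow> c k \<le> N"
proof -
  assume c: "c \<in> Ty K N"
  show ?thesis
  proof (cases "k \<le> K")
    case True
    then have "c k \<le> (\<Sum>k\<le>K. c k)" by (intro member_le_sum) auto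
    then show ?thesis using c by (simp add: Ty_def)
  next
    case False then show ?thesis using c by (simp add: Ty_def)
  qed
qed

lemma finite_Ty: "finite (Ty K N)"
proof -
  have "Ty K N \<subseteq> {c. \<forall>x. (x \<in> {..K} \<longrightarrow> c x \<in> {..N}) \<and> (x \<notin> {..K} \<longrightarrow> c x = 0)}"
    using Ty_le by (auto simp: Ty_def)
  moreover have "finite {c. \<forall>x. (x \<in> {..K} \<longrightarrow> c x \<in> {..N}) \<and> (x \<notin> {..K} \<longrightarrow> c x = 0)}"
    by (intro finite_set_of_finite_funs) auto
  ultimately show ?thesis by (rule finite_subset)
qed

lemma sum_upd:
  fixes f :: "nat \<Rightarrow> 'a::comm_monoid_add"
  assumes "k \<le> K"
  shows "(\<Sum>j\<le>K. (f(k := v)) j) = v + (\<Sum>j\<in>{..K} - {k}. f j)"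
  using assms by (subst sum.remove[of _ k]) auto

lemma sum_remove': "k \<le> K \<Longrightarrow> (\<Sum>j\<le>K. (f::nat \<Rightarrow> 'a::comm_monoid_add) j) = f k + (\<Sum>j\<in>{..K} - {k}. f j)"
  by (subst sum.remove[of _ k]) auto

lemma prod_upd:
  fixes f :: "nat \<Rightarrow> 'a::comm_monoid_mult"
  assumes "k \<le> K"
  shows "(\<Prod>j\<le>K. (f(k := v)) j) = v * (\<Prod>j\<in>{..K} - {k}. f j)"
  using assms by (subst prod.remove[of _ k]) auto

lemma prod_remove': "k \<le> K \<Longrightarrow> (\<Prod>j\<le>K. (f::nat \<Rightarrow> 'a::comm_monoid_mult) j) = f k * (\<Prod>j\<in>{..K} - {k}. f j)"
  by (subst prod.remove[of _ k]) auto

lemma Ty_up: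
  assumes "c \<in> Ty K N" "k \<le> K" shows "c(k := Suc (c k)) \<in> Ty K (Suc N)"
proof -
  have "(\<Sum>j\<le>K. (c(k := Suc (c k))) j) = Suc (c k) + (\<Sum>j\<in>{..K} - {k}. c j)"
    by (rule sum_upd[OF assms(2)])
  also have "\<dots> = Suc (\<Sum>j\<le>K. c j)" using sum_remove'[OF assms(2), of c] by simp
  finally show ?thesis using assms by (auto simp: Ty_def)
qed

lemma Ty_down:
  assumes "c \<in> Ty K (Suc N)" "k \<le> K" "0 < c k" shows "c(k := c k - 1) \<in> Ty K N"
proof -
  have "(\<Sum>j\<le>K. (c(k := c k - 1)) j) = (c k - 1) + (\<Sum>j\<in>{..K} - {k}. c j)"
    by (rule sum_upd[OF assms(2)])
  also have "\<dots> = (\<Sum>j\<le>K. c j) - 1" using sum_remove'[OF assms(2), of c] assms(3) by simp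
  finally show ?thesis using assms by (auto simp: Ty_def)
qed

lemma Ty_reindex:
  assumes k: "k \<le> K"
  shows "(\<Sum>c'\<in>{c'\<in>Ty K N. P (c'(k := Suc (c' k)))}. f (c'(k := Suc (c' k))) c')
       = (\<Sum>c\<in>{c\<in>Ty K (Suc N). 0 < c k \<and> P c}. f c (c(k := c k - 1)))"
proof (rule sum.reindex_bij_witness[where i = "\<lambda>c. c(k := c k - 1)" and j = "\<lambda>c. c(k := Suc (c k))"])
  fix a assume "a \<in> {c'\<in>Ty K N. P (c'(k := Suc (c' k)))}"
  then show "(a(k := Suc (a k)))(k := (a(k := Suc (a k))) k - 1) = a" by simp
next
  fix a assume "a \<in> {c'\<in>Ty K N. P (c'(k := Suc (c' k)))}"
  then show "a(k := Suc (a k)) \<in> {c\<in>Ty K (Suc N). 0 < c k \<and> P c}" using Ty_up k by auto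
next
  fix b assume b: "b \<in> {c\<in>Ty K (Suc N). 0 < c k \<and> P c}"
  then show "(b(k := b k - 1))(k := Suc ((b(k := b k - 1)) k)) = b" by auto
next
  fix b assume b: "b \<in> {c\<in>Ty K (Suc N). 0 < c k \<and> P c}"
  then have "b(k := Suc (b k - 1)) = b" by auto
  then show "b(k := b k - 1) \<in> {c'\<in>Ty K N. P (c'(k := Suc (c' k)))}"
    using b Ty_down k by auto
next
  fix a assume "a \<in> {c'\<in>Ty K N. P (c'(k := Suc (c' k)))}"
  then show "f (a(k := Suc (a k))) ((a(k := Suc (a k)))(k := (a(k := Suc (a k))) k - 1)) = f (a(k := Suc (a k))) a"
    by simp
qed

lemma mult_down:
  assumes "c \<in> Ty K (Suc N)" "k \<le> K" "0 < c k"
  shows "real (Suc N) * mult K N (c(k := c k - 1)) = real (c k) * mult K (Suc N) c"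
proof -
  have P: "(\<Prod>j\<le>K. fact (c j)) = real (c k) * (\<Prod>j\<le>K. fact ((c(k := c k - 1)) j))"
  proof -
    have "(\<Prod>j\<le>K. fact ((c(k := c k - 1)) j) :: real) = fact (c k - 1) * (\<Prod>j\<in>{..K} - {k}. fact (c j))"
      using prod_upd[OF assms(2), of "\<lambda>j. fact (c j) :: real" "fact (c k - 1)"]
      by (simp add: fun_upd_def if_distrib cong: if_cong)
    moreover have "(\<Prod>j\<le>K. fact (c j) :: real) = fact (c k) * (\<Prod>j\<in>{..K} - {k}. fact (c j))"
      by (rule prod_remove'[OF assms(2)])
    moreover have "(fact (c k) :: real) = real (c k) * fact (c k - 1)"
      using assms(3) by (rule fact_reduce)
    ultimately show ?thesis by simp
  qed
  have pos: "(\<Prod>j\<le>K. fact ((c(k := c k - 1)) j) :: real) > 0" by (intro prod_pos) auto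
  show ?thesis unfolding mult_def P using pos assms(3)
    by (simp add: field_simps)
qed

lemma pw_down:
  assumes "k \<le> K" "0 < c k"
  shows "\<mu> k * pw \<mu> K (c(k := c k - 1)) = pw \<mu> K c"
proof -
  have "pw \<mu> K (c(k := c k - 1)) = \<mu> k ^ (c k - 1) * (\<Prod>j\<in>{..K} - {k}. \<mu> j ^ c j)"
    unfolding pw_def using prod_upd[OF assms(1), of "\<lambda>j. \<mu> j ^ c j" "\<mu> k ^ (c k - 1)"]
    by (simp add: fun_upd_def if_distrib cong: if_cong)
  moreover have "pw \<mu> K c = \<mu> k ^ c k * (\<Prod>j\<in>{..K} - {k}. \<mu> j ^ c j)"
    unfolding pw_def by (rule prod_remove'[OF assms(1)])
  moreover have "\<mu> k ^ c k = \<mu> k * \<mu> k ^ (c k - 1)"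
    using assms(2) by (cases "c k") auto
  ultimately show ?thesis by simp
qed

lemma wsum_up:
  assumes "k \<le> K"
  shows "(\<Sum>j\<le>K. j * (c(k := Suc (c k))) j) = (\<Sum>j\<le>K. j * c j) + k"
proof -
  have "(\<Sum>j\<le>K. j * (c(k := Suc (c k))) j) = k * Suc (c k) + (\<Sum>j\<in>{..K} - {k}. j * c j)"
    using sum_upd[OF assms, of "\<lambda>j. j * c j" "k * Suc (c k)"]
    by (simp add: fun_upd_def if_distrib cong: if_cong)
  moreover have "(\<Sum>j\<le>K. j * c j) = k * c k + (\<Sum>j\<in>{..K} - {k}. j * c j)"
    by (rule sum_remove'[OF assms])
  ultimately show ?thesis by simp
qed


lemma Q_rec:
  assumes m: "1 \<le> m"
  shows "real (Suc N') * (\<Sum>k\<le>K. \<mu> k * real (m - 1 + k) * Qs \<mu> K (m - 1 + k) N')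
       = real m * real N' * Qs \<mu> K m (Suc N')"
proof -
  define S where "S = {c\<in>Ty K (Suc N'). (\<Sum>j\<le>K. j * c j) + m = Suc N'}"
  have finS: "finite S" unfolding S_def using finite_Ty by simp
  have A: "real (Suc N') * (\<mu> k * real (m - 1 + k) * Qs \<mu> K (m - 1 + k) N')
      = (\<Sum>c\<in>S. real (m - 1 + k) * real (c k) * (mult K (Suc N') c * pw \<mu> K c))" if k: "k \<le> K" for k
  proof -
    define P where "P c = ((\<Sum>j\<le>K. j * c j) + m = Suc N')" for c :: "nat \<Rightarrow> nat"
    have eqv: "\<And>c. ((\<Sum>j\<le>K. j * c j) + (m - 1 + k) = N') = P (c(k := Suc (c k)))"
      unfolding P_def wsum_up[OF k] using m by arith
    have set_eq: "{c\<in>Ty K N'. (\<Sum>j\<le>K. j * c j) + (m - 1 + k) = N'} = {c'\<in>Ty K N'. P (c'(k := Suc (c' k)))}"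
      by (simp only: eqv)
    have "real (Suc N') * (\<mu> k * real (m - 1 + k) * Qs \<mu> K (m - 1 + k) N')
        = (\<Sum>c'\<in>{c'\<in>Ty K N'. P (c'(k := Suc (c' k)))}. real (Suc N') * \<mu> k * real (m - 1 + k) * (mult K N' c' * pw \<mu> K c'))"
      unfolding Qs_def set_eq by (simp add: sum_distrib_left mult.assoc)
    also have "\<dots> = (\<Sum>c\<in>{c\<in>Ty K (Suc N'). 0 < c k \<and> P c}. real (Suc N') * \<mu> k * real (m - 1 + k) *
                     (mult K N' (c(k := c k - 1)) * pw \<mu> K (c(k := c k - 1))))"
      using Ty_reindex[OF k, where P=P and N=N' and f="\<lambda>c c'. real (Suc N') * \<mu> k * real (m - 1 + k) * (mult K N' c' * pw \<mu> K c')"]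
      by simp
    also have "\<dots> = (\<Sum>c\<in>{c\<in>Ty K (Suc N'). 0 < c k \<and> P c}. real (m - 1 + k) * real (c k) * (mult K (Suc N') c * pw \<mu> K c))"
    proof (rule sum.cong[OF refl])
      fix c assume c: "c \<in> {c\<in>Ty K (Suc N'). 0 < c k \<and> P c}"
      have "real (Suc N') * \<mu> k * real (m - 1 + k) * (mult K N' (c(k := c k - 1)) * pw \<mu> K (c(k := c k - 1)))
          = real (m - 1 + k) * (real (Suc N') * mult K N' (c(k := c k - 1))) * (\<mu> k * pw \<mu> K (c(k := c k - 1)))"
        by (simp add: algebra_simps)
      also have "\<dots> = real (m - 1 + k) * (real (c k) * mult K (Suc N') c) * pw \<mu> K c"
        using c mult_down[of c K N' k] pw_down[OF k, of c \<mu>] k by simp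
      finally show "real (Suc N') * \<mu> k * real (m - 1 + k) * (mult K N' (c(k := c k - 1)) * pw \<mu> K (c(k := c k - 1)))
          = real (m - 1 + k) * real (c k) * (mult K (Suc N') c * pw \<mu> K c)" by (simp add: algebra_simps)
    qed
    also have "\<dots> = (\<Sum>c\<in>S. real (m - 1 + k) * real (c k) * (mult K (Suc N') c * pw \<mu> K c))"
      by (rule sum.mono_neutral_left) (auto simp: S_def P_def finite_Ty)
    finally show ?thesis .
  qed
  have "real (Suc N') * (\<Sum>k\<le>K. \<mu> k * real (m - 1 + k) * Qs \<mu> K (m - 1 + k) N')
      = (\<Sum>k\<le>K. \<Sum>c\<in>S. real (m - 1 + k) * real (c k) * (mult K (Suc N') c * pw \<mu> K c))"
    unfolding sum_distrib_left by (rule sum.cong[OF refl], rule A, simp)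
  also have "\<dots> = (\<Sum>c\<in>S. (\<Sum>k\<le>K. real (m - 1 + k) * real (c k)) * (mult K (Suc N') c * pw \<mu> K c))"
    by (subst sum.swap) (simp add: sum_distrib_right)
  also have "\<dots> = (\<Sum>c\<in>S. (real m * real N') * (mult K (Suc N') c * pw \<mu> K c))"
  proof (rule sum.cong[OF refl])
    fix c assume c: "c \<in> S"
    have n1: "(\<Sum>k\<le>K. c k) = Suc N'" using c by (simp add: S_def Ty_def)
    have n2: "(\<Sum>k\<le>K. k * c k) + m = Suc N'" using c by (simp add: S_def)
    have s1: "(\<Sum>k\<le>K. real (c k)) = real (Suc N')"
    proof -
      have "real (\<Sum>k\<le>K. c k) = real (Suc N')" using n1 by (simp only:)
      then show ?thesis by simp
    qed
    have s2: "(\<Sum>k\<le>K. real k * real (c k)) + real m = real (Suc N')"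
    proof -
      have "real ((\<Sum>k\<le>K. k * c k) + m) = real (Suc N')" using n2 by (simp only:)
      then show ?thesis by simp
    qed
    have "(\<Sum>k\<le>K. real (m - 1 + k) * real (c k)) = (real m - 1) * (\<Sum>k\<le>K. real (c k)) + (\<Sum>k\<le>K. real k * real (c k))"
    proof -
      have "\<And>k. real (m - 1 + k) * real (c k) = (real m - 1) * real (c k) + real k * real (c k)"
        using m by (simp add: of_nat_diff algebra_simps)
      then show ?thesis by (simp add: sum.distrib sum_distrib_left)
    qed
    also have "\<dots> = real m * real N'" using s1 s2 by (simp add: algebra_simps)
    finally show "(\<Sum>k\<le>K. real (m - 1 + k) * real (c k)) * (mult K (Suc N') c * pw \<mu> K c)
      = (real m * real N') * (mult K (Suc N') c * pw \<mu> K c)" by simp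
  qed
  also have "\<dots> = real m * real N' * Qs \<mu> K m (Suc N')"
    unfolding Qs_def S_def by (simp add: sum_distrib_left)
  finally show ?thesis .
qed

lemma Qs_0: "1 \<le> m \<Longrightarrow> Qs \<mu> K m 0 = 0"
  unfolding Qs_def by simp

lemma Qs_1: assumes m1: "1 \<le> m" shows "Qs \<mu> K m 1 = (if m = 1 then \<mu> 0 else 0)"
proof (cases "m = 1")
  case True
  define e0 where "e0 = (\<lambda>k::nat. if k = 0 then 1 else (0::nat))"
  have "{c\<in>Ty K 1. (\<Sum>k\<le>K. k * c k) + m = 1} = {e0}"
  proof
    show "{c\<in>Ty K 1. (\<Sum>k\<le>K. k * c k) + m = 1} \<subseteq> {e0}"
    proof
      fix c assume c: "c \<in> {c\<in>Ty K 1. (\<Sum>k\<le>K. k * c k) + m = 1}"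
      then have z: "\<forall>k\<le>K. k * c k = 0" using True by simp
      have s: "(\<Sum>k\<le>K. c k) = 1" using c by (simp add: Ty_def)
      have "(\<Sum>k\<le>K. c k) = c 0 + (\<Sum>k\<in>{..K} - {0}. c k)" by (rule sum_remove') simp
      moreover have "(\<Sum>k\<in>{..K} - {0}. c k) = 0" using z by (intro sum.neutral) auto
      ultimately have "c 0 = 1" using s by simp
      moreover have "\<forall>k>K. c k = 0" using c by (simp add: Ty_def)
      ultimately have "c = e0" using z unfolding e0_def
        by (metis (full_types) linorder_not_le mult_is_0 neq0_conv)
      then show "c \<in> {e0}" by simp
    qed
    show "{e0} \<subseteq> {c\<in>Ty K 1. (\<Sum>k\<le>K. k * c k) + m = 1}"
    proof -
      have "(\<Sum>k\<le>K. e0 k) = 1" unfolding e0_def by (simp add: sum.delta)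
      moreover have "(\<Sum>k\<le>K. k * e0 k) = 0" unfolding e0_def by simp
      ultimately show ?thesis using True by (auto simp: Ty_def e0_def)
    qed
  qed
  moreover have "mult K 1 e0 = 1" unfolding mult_def e0_def by (simp add: prod.neutral)
  moreover have "pw \<mu> K e0 = \<mu> 0"
  proof -
    have "pw \<mu> K e0 = (\<Prod>k\<le>K. if k = 0 then \<mu> 0 else 1)"
      unfolding pw_def e0_def by (intro prod.cong refl) auto
    then show ?thesis by (simp add: prod.delta)
  qed
  ultimately show ?thesis using True by (simp add: Qs_def)
next
  case False
  have E: "{c\<in>Ty K 1. (\<Sum>k\<le>K. k * c k) + m = 1} = {}"
    using False m1 by auto
  show ?thesis using False unfolding Qs_def E by simp
qed


lemma W_Q:
  assumes mu: "\<forall>k. 0 \<le> \<mu> k"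
  shows "real m * Qs \<mu> K m N \<le> real N * Wf \<mu> K m N"
proof (induction N arbitrary: m)
  case 0
  show ?case by (cases "m = 0") (simp_all add: Qs_0)
next
  case (Suc N')
  show ?case
  proof (cases "m = 0")
    case True then show ?thesis using Wf_nonneg[OF mu] by simp
  next
    case False
    then have m: "1 \<le> m" by simp
    have rec: "(\<Sum>k\<le>K. \<mu> k * Wf \<mu> K (m - 1 + k) N') \<le> Wf \<mu> K m (Suc N')"
      by (rule Wf_rec[OF mu m refl])
    show ?thesis
    proof (cases "N' = 0")
      case True
      show ?thesis
      proof (cases "m = 1")
        case True
        have "\<mu> 0 * Wf \<mu> K (m - 1 + 0) N' \<le> (\<Sum>k\<le>K. \<mu> k * Wf \<mu> K (m - 1 + k) N')"
          using mu Wf_nonneg[OF mu] by (intro member_le_sum) auto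
        then have "\<mu> 0 \<le> Wf \<mu> K m (Suc N')" using rec True \<open>N' = 0\<close> Wf_0_0 by simp
        then show ?thesis using Qs_1[OF m] True \<open>N' = 0\<close> by simp
      next
        case False
        then show ?thesis using Qs_1[OF m] \<open>N' = 0\<close> Wf_nonneg[OF mu] by simp
      qed
    next
      case False
      have "real m * real N' * Qs \<mu> K m (Suc N') = real (Suc N') * (\<Sum>k\<le>K. \<mu> k * real (m - 1 + k) * Qs \<mu> K (m - 1 + k) N')"
        using Q_rec[OF m] by simp
      also have "\<dots> \<le> real (Suc N') * (\<Sum>k\<le>K. \<mu> k * (real N' * Wf \<mu> K (m - 1 + k) N'))"
      proof (intro mult_left_mono sum_mono)
        fix k
        have hh: "real (m - 1 + k) * Qs \<mu> K (m - 1 + k) N' \<le> real N' * Wf \<mu> K (m - 1 + k) N'"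
          by (rule Suc.IH)
        show "\<mu> k * real (m - 1 + k) * Qs \<mu> K (m - 1 + k) N' \<le> \<mu> k * (real N' * Wf \<mu> K (m - 1 + k) N')"
          using mu mult_left_mono[OF hh, of "\<mu> k"] by (simp add: mult.assoc)
      qed simp
      also have "\<dots> = real (Suc N') * real N' * (\<Sum>k\<le>K. \<mu> k * Wf \<mu> K (m - 1 + k) N')"
        by (simp add: sum_distrib_left algebra_simps)
      also have "\<dots> \<le> real (Suc N') * real N' * Wf \<mu> K m (Suc N')"
        using rec by (intro mult_left_mono) auto
      finally have "real N' * (real m * Qs \<mu> K m (Suc N')) \<le> real N' * (real (Suc N') * Wf \<mu> K m (Suc N'))"
        by (simp add: algebra_simps)
      then show ?thesis using False by simp
    qed
  qed
qed


lemma Ty_0: "Ty K 0 = {\<lambda>_. 0}"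
proof
  show "Ty K 0 \<subseteq> {\<lambda>_. 0}" using Ty_le by fastforce
  show "{\<lambda>_. 0} \<subseteq> Ty K 0" by (simp add: Ty_def)
qed

lemma multinomial:
  fixes p :: "nat \<Rightarrow> real"
  shows "(\<Sum>c\<in>Ty K N. mult K N c * pw p K c) = (\<Sum>k\<le>K. p k) ^ N"
proof (induction N)
  case 0 then show ?case by (simp add: Ty_0 mult_def pw_def)
next
  case (Suc N)
  have "(\<Sum>k\<le>K. \<Sum>c'\<in>Ty K N. p k * (mult K N c' * pw p K c')) = (\<Sum>k\<le>K. p k * (\<Sum>c'\<in>Ty K N. mult K N c' * pw p K c'))"
    by (simp add: sum_distrib_left)
  also have "\<dots> = (\<Sum>k\<le>K. p k) ^ Suc N" using Suc by (simp add: sum_distrib_right)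
  finally have "(\<Sum>k\<le>K. p k) ^ Suc N = (\<Sum>k\<le>K. \<Sum>c'\<in>Ty K N. p k * (mult K N c' * pw p K c'))" by simp
  also have "\<dots> = (\<Sum>k\<le>K. \<Sum>c\<in>{c\<in>Ty K (Suc N). 0 < c k \<and> True}. p k * (mult K N (c(k := c k - 1)) * pw p K (c(k := c k - 1))))"
  proof (rule sum.cong[OF refl])
    fix k assume "k \<in> {..K}"
    then have k: "k \<le> K" by simp
    show "(\<Sum>c'\<in>Ty K N. p k * (mult K N c' * pw p K c')) = (\<Sum>c\<in>{c\<in>Ty K (Suc N). 0 < c k \<and> True}. p k * (mult K N (c(k := c k - 1)) * pw p K (c(k := c k - 1))))"
      using Ty_reindex[OF k, where P="\<lambda>_. True" and N=N and f="\<lambda>c c'. p k * (mult K N c' * pw p K c')"] by simp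
  qed
  also have "\<dots> = (\<Sum>k\<le>K. \<Sum>c\<in>Ty K (Suc N). (real (c k) / real (Suc N)) * (mult K (Suc N) c * pw p K c))"
  proof (rule sum.cong[OF refl])
    fix k assume "k \<in> {..K}"
    then have k: "k \<le> K" by simp
    have "(\<Sum>c\<in>{c\<in>Ty K (Suc N). 0 < c k \<and> True}. p k * (mult K N (c(k := c k - 1)) * pw p K (c(k := c k - 1))))
        = (\<Sum>c\<in>{c\<in>Ty K (Suc N). 0 < c k \<and> True}. (real (c k) / real (Suc N)) * (mult K (Suc N) c * pw p K c))"
    proof (rule sum.cong[OF refl])
      fix c assume c: "c \<in> {c\<in>Ty K (Suc N). 0 < c k \<and> True}"
      have m: "mult K N (c(k := c k - 1)) = real (c k) * mult K (Suc N) c / real (Suc N)"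
        using mult_down[of c K N k] c k by (simp add: field_simps del: of_nat_Suc)
      have "p k * (mult K N (c(k := c k - 1)) * pw p K (c(k := c k - 1)))
          = mult K N (c(k := c k - 1)) * (p k * pw p K (c(k := c k - 1)))" by simp
      also have "\<dots> = real (c k) * mult K (Suc N) c / real (Suc N) * pw p K c"
        using pw_down[OF k, of c p] c m by simp
      finally show "p k * (mult K N (c(k := c k - 1)) * pw p K (c(k := c k - 1)))
          = (real (c k) / real (Suc N)) * (mult K (Suc N) c * pw p K c)" by simp
    qed
    also have "\<dots> = (\<Sum>c\<in>Ty K (Suc N). (real (c k) / real (Suc N)) * (mult K (Suc N) c * pw p K c))"
      by (rule sum.mono_neutral_left) (auto simp: finite_Ty)
    finally show "(\<Sum>c\<in>{c\<in>Ty K (Suc N). 0 < c k \<and> True}. p k * (mult K N (c(k := c k - 1)) * pw p K (c(k := c k - 1))))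
      = (\<Sum>c\<in>Ty K (Suc N). (real (c k) / real (Suc N)) * (mult K (Suc N) c * pw p K c))" .
  qed
  also have "\<dots> = (\<Sum>c\<in>Ty K (Suc N). (\<Sum>k\<le>K. real (c k) / real (Suc N)) * (mult K (Suc N) c * pw p K c))"
    by (subst sum.swap) (simp add: sum_distrib_right)
  also have "\<dots> = (\<Sum>c\<in>Ty K (Suc N). mult K (Suc N) c * pw p K c)"
  proof (rule sum.cong[OF refl])
    fix c assume c: "c \<in> Ty K (Suc N)"
    have "(\<Sum>k\<le>K. c k) = Suc N" using c by (simp add: Ty_def)
    then have "(\<Sum>k\<le>K. real (c k)) = real (Suc N)" by (metis of_nat_sum)
    then have "(\<Sum>k\<le>K. real (c k) / real (Suc N)) = 1"
      by (simp add: sum_divide_distrib[symmetric] del: of_nat_Suc)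
    then show "(\<Sum>k\<le>K. real (c k) / real (Suc N)) * (mult K (Suc N) c * pw p K c) = mult K (Suc N) c * pw p K c"
      by simp
  qed
  finally show ?case by simp
qed

lemma fact_ge_pow: "fact a * a ^ d \<le> (fact (a + d) :: nat)"
proof (induction d)
  case 0 then show ?case by simp
next
  case (Suc d)
  have "fact a * a ^ Suc d = a * (fact a * a ^ d)" by simp
  also have "\<dots> \<le> (a + Suc d) * fact (a + d)" using Suc by (intro mult_mono) auto
  also have "\<dots> = fact (a + Suc d)" by simp
  finally show ?case .
qed

lemma fact_le_pow: "fact (b + d) \<le> fact b * (b + d) ^ d"
proof (induction d)
  case 0 then show ?case by simp
next
  case (Suc d)
  have "fact (b + Suc d) = (b + Suc d) * fact (b + d)" by simp
  also have "\<dots> \<le> (b + Suc d) * (fact b * (b + d) ^ d)" using Suc by (rule mult_le_mono2)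
  also have "\<dots> \<le> (b + Suc d) * (fact b * (b + Suc d) ^ d)"
    by (intro mult_le_mono2 mult_le_mono2 power_mono) auto
  also have "\<dots> = fact b * (b + Suc d) ^ Suc d" by (simp add: algebra_simps)
  finally show ?case .
qed

lemma pow_fact_ineq: "a ^ b * fact a \<le> a ^ a * (fact b :: nat)"
proof (cases "b \<le> a")
  case True
  then obtain d where d: "a = b + d" by (metis le_iff_add)
  have "a ^ b * fact a \<le> a ^ b * (fact b * a ^ d)" using fact_le_pow[of b d] d by simp
  also have "\<dots> = a ^ (b + d) * fact b" by (simp add: power_add)
  finally show ?thesis using d by simp
next
  case False
  then obtain d where d: "b = a + d" by (metis le_iff_add nat_le_linear)
  have "a ^ b * fact a = a ^ a * (fact a * a ^ d)" using d by (simp add: power_add)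
  also have "\<dots> \<le> a ^ a * fact b" using fact_ge_pow[of a d] d by simp
  finally show ?thesis .
qed

lemma card_Ty: "card (Ty K N) \<le> (Suc N) ^ (Suc K)"
proof -
  have inj: "inj_on (\<lambda>c. map c [0..<Suc K]) (Ty K N)"
  proof (rule inj_onI)
    fix c c' assume c: "c \<in> Ty K N" and c': "c' \<in> Ty K N" and eq: "map c [0..<Suc K] = map c' [0..<Suc K]"
    show "c = c'"
    proof
      fix k
      show "c k = c' k"
      proof (cases "k \<le> K")
        case True
        have "map c [0..<Suc K] ! k = map c' [0..<Suc K] ! k" by (simp only: eq)
        moreover have "map c [0..<Suc K] ! k = c k" using True by (subst nth_map_upt) auto
        moreover have "map c' [0..<Suc K] ! k = c' k" using True by (subst nth_map_upt) auto
        ultimately show ?thesis by simp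
      next
        case False then show ?thesis using c c' by (simp add: Ty_def)
      qed
    qed
  qed
  have sub: "(\<lambda>c. map c [0..<Suc K]) ` Ty K N \<subseteq> {xs. set xs \<subseteq> {..N} \<and> length xs = Suc K}"
    using Ty_le by auto
  have "card (Ty K N) = card ((\<lambda>c. map c [0..<Suc K]) ` Ty K N)" by (rule card_image[OF inj, symmetric])
  also have "\<dots> \<le> card {xs. set xs \<subseteq> {..N} \<and> length xs = Suc K}"
    by (rule card_mono[OF _ sub]) (simp add: finite_lists_length_eq)
  also have "\<dots> = (Suc N) ^ (Suc K)" by (simp add: card_lists_length_eq)
  finally show ?thesis .
qed


lemma pw_frac:
  assumes "d \<in> Ty K N"
  shows "pw (\<lambda>k. real (c k) / real N) K d = real (\<Prod>k\<le>K. c k ^ d k) / real N ^ N"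
proof -
  have "pw (\<lambda>k. real (c k) / real N) K d = (\<Prod>k\<le>K. real (c k) ^ d k / real N ^ d k)"
    unfolding pw_def by (simp add: power_divide)
  also have "\<dots> = (\<Prod>k\<le>K. real (c k) ^ d k) / (\<Prod>k\<le>K. real N ^ d k)"
    by (rule prod_dividef)
  also have "(\<Prod>k\<le>K. real N ^ d k) = real N ^ (\<Sum>k\<le>K. d k)" by (simp add: power_sum)
  also have "(\<Sum>k\<le>K. d k) = N" using assms by (simp add: Ty_def)
  finally show ?thesis by simp
qed

lemma mult_max:
  assumes c: "c \<in> Ty K N" and d: "d \<in> Ty K N"
  shows "mult K N d * pw (\<lambda>k. real (c k) / real N) K d \<le> mult K N c * pw (\<lambda>k. real (c k) / real N) K c"
proof -
  define X where "X = (\<Prod>k\<le>K. c k ^ d k)"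
  define Y where "Y = (\<Prod>k\<le>K. c k ^ c k)"
  define Fc where "Fc = (\<Prod>k\<le>K. fact (c k) :: nat)"
  define Fd where "Fd = (\<Prod>k\<le>K. fact (d k) :: nat)"
  have nat_ineq: "X * Fc \<le> Y * Fd"
  proof -
    have "(\<Prod>k\<le>K. c k ^ d k * fact (c k)) \<le> (\<Prod>k\<le>K. c k ^ c k * (fact (d k) :: nat))"
      by (intro prod_mono) (auto simp: pow_fact_ineq)
    then show ?thesis unfolding X_def Y_def Fc_def Fd_def by (simp add: prod.distrib)
  qed
  have Fc0: "0 < Fc" and Fd0: "0 < Fd" unfolding Fc_def Fd_def by (auto intro: prod_pos)
  have mc: "mult K N c = fact N / real Fc" unfolding mult_def Fc_def by simp
  have md: "mult K N d = fact N / real Fd" unfolding mult_def Fd_def by simp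
  have r: "real X * real Fc \<le> real Y * real Fd" using nat_ineq by (metis of_nat_le_iff of_nat_mult)
  have "real X / real Fd \<le> real Y / real Fc" using r Fc0 Fd0 by (simp add: divide_simps)
  then have "fact N * (real X / real Fd) / real N ^ N \<le> fact N * (real Y / real Fc) / real N ^ N"
    by (intro divide_right_mono mult_left_mono) auto
  then show ?thesis unfolding pw_frac[OF c] pw_frac[OF d] mc md X_def[symmetric] Y_def[symmetric]
    by (simp add: field_simps)
qed

lemma type_self_lb:
  assumes c: "c \<in> Ty K N" and N: "1 \<le> N"
  shows "1 \<le> real (Suc N) ^ Suc K * (mult K N c * pw (\<lambda>k. real (c k) / real N) K c)"
proof -
  define p where "p = (\<lambda>k. real (c k) / real N)"
  have "(\<Sum>k\<le>K. c k) = N" using c by (simp add: Ty_def)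
  then have "(\<Sum>k\<le>K. real (c k)) = real N" by (metis of_nat_sum)
  then have s: "(\<Sum>k\<le>K. p k) = 1" using N unfolding p_def by (simp add: sum_divide_distrib[symmetric])
  have "1 = (\<Sum>d\<in>Ty K N. mult K N d * pw p K d)" using multinomial[of K N p] s by simp
  also have "\<dots> \<le> (\<Sum>d\<in>Ty K N. mult K N c * pw p K c)"
    by (intro sum_mono) (use mult_max[OF c] p_def in auto)
  also have "\<dots> = real (card (Ty K N)) * (mult K N c * pw p K c)" by simp
  also have "\<dots> \<le> real (Suc N) ^ Suc K * (mult K N c * pw p K c)"
  proof (rule mult_right_mono)
    show "real (card (Ty K N)) \<le> real (Suc N) ^ Suc K" using card_Ty[of K N] by (metis of_nat_le_iff of_nat_power)
    show "0 \<le> mult K N c * pw p K c" unfolding mult_def pw_def p_def by (intro mult_nonneg_nonneg divide_nonneg_nonneg prod_nonneg) auto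
  qed
  finally show ?thesis unfolding p_def .
qed


lemma ln_lower: "0 < x \<Longrightarrow> 1 - 1 / x \<le> ln (x::real)"
proof -
  assume x: "0 < x"
  have "ln (1 / x) \<le> 1 / x - 1" using x by (intro ln_le_minus_one) simp
  then show ?thesis using x by (simp add: ln_div)
qed

lemma pw_lb:
  assumes mu: "\<forall>k. 0 \<le> \<mu> k" "(\<Sum>k\<le>K. \<mu> k) = 1"
    and c: "c \<in> Ty K N" and N: "1 \<le> N"
    and supp: "\<forall>k\<le>K. \<mu> k = 0 \<longrightarrow> c k = 0"
    and a: "0 < a" "\<forall>k\<le>K. 0 < \<mu> k \<longrightarrow> a \<le> \<mu> k"
    and D: "\<forall>k\<le>K. \<bar>real (c k) - real N * \<mu> k\<bar> \<le> D"
  shows "pw (\<lambda>k. real (c k) / real N) K c * exp (- (real (Suc K) * D\<^sup>2 / a)) \<le> pw \<mu> K c"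
proof -
  have Npos: "0 < real N" using N by simp
  define f where "f k = (if 0 < \<mu> k then real (c k) - (real (c k))\<^sup>2 / (real N * \<mu> k) else 0)" for k
  have per: "(real (c k) / real N) ^ c k * exp (f k) \<le> \<mu> k ^ c k" if k: "k \<le> K" for k
  proof (cases "c k = 0")
    case True then show ?thesis by (simp add: f_def)
  next
    case False
    then have mk: "0 < \<mu> k" using supp k mu(1) by (metis le_less)
    have ck: "0 < real (c k)" using False by simp
    define x where "x = real N * \<mu> k / real (c k)"
    have x0: "0 < x" unfolding x_def using mk ck Npos by simp
    have "f k = real (c k) * (1 - 1 / x)"
      unfolding f_def x_def using mk ck Npos by (simp add: power2_eq_square field_simps)
    also have "\<dots> \<le> real (c k) * ln x" using ln_lower[OF x0] ck by (intro mult_left_mono) auto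
    finally have "exp (f k) \<le> exp (real (c k) * ln x)" by simp
    also have "\<dots> = x ^ c k" using x0 by (simp add: exp_of_nat_mult)
    finally have e: "exp (f k) \<le> x ^ c k" .
    have "(real (c k) / real N) ^ c k * exp (f k) \<le> (real (c k) / real N) ^ c k * x ^ c k"
      using e by (intro mult_left_mono) (simp_all add: Npos)
    also have "\<dots> = (real (c k) / real N * x) ^ c k" by (rule power_mult_distrib[symmetric])
    also have "real (c k) / real N * x = \<mu> k" unfolding x_def using ck Npos by simp
    finally show ?thesis .
  qed
  have "pw (\<lambda>k. real (c k) / real N) K c * exp (\<Sum>k\<le>K. f k) = (\<Prod>k\<le>K. (real (c k) / real N) ^ c k * exp (f k))"
    unfolding pw_def by (simp add: exp_sum prod.distrib)
  also have "\<dots> \<le> pw \<mu> K c" unfolding pw_def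
    by (intro prod_mono) (auto simp: per)
  finally have A: "pw (\<lambda>k. real (c k) / real N) K c * exp (\<Sum>k\<le>K. f k) \<le> pw \<mu> K c" .
  define g where "g k = (if 0 < \<mu> k then (real (c k) - real N * \<mu> k)\<^sup>2 / (real N * \<mu> k) else 0)" for k
  have fg: "f k = - g k - real (c k) + real N * \<mu> k" if k: "k \<le> K" for k
  proof (cases "0 < \<mu> k")
    case True
    then show ?thesis unfolding f_def g_def using Npos by (simp add: power2_eq_square field_simps)
  next
    case False
    then have "\<mu> k = 0" using mu(1) by (metis le_less)
    then show ?thesis unfolding f_def g_def using supp k by simp
  qed
  have sc: "(\<Sum>k\<le>K. real (c k)) = real N"
  proof -
    have "(\<Sum>k\<le>K. c k) = N" using c by (simp add: Ty_def)
    then show ?thesis by (metis of_nat_sum)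
  qed
  have "(\<Sum>k\<le>K. f k) = - (\<Sum>k\<le>K. g k) - (\<Sum>k\<le>K. real (c k)) + real N * (\<Sum>k\<le>K. \<mu> k)"
    by (simp add: fg sum.distrib sum_subtractf sum_distrib_left sum_negf)
  also have "\<dots> = - (\<Sum>k\<le>K. g k)" using sc mu(2) by simp
  finally have fs: "(\<Sum>k\<le>K. f k) = - (\<Sum>k\<le>K. g k)" .
  have gb: "g k \<le> D\<^sup>2 / a" if k: "k \<le> K" for k
  proof (cases "0 < \<mu> k")
    case True
    have "(real (c k) - real N * \<mu> k)\<^sup>2 \<le> D\<^sup>2"
      using D k by (metis abs_ge_zero power2_abs power_mono)
    moreover have "a \<le> real N * \<mu> k"
    proof -
      have "a \<le> \<mu> k" using a True k by simp
      also have "\<dots> \<le> real N * \<mu> k" using N True by (simp add: mult_le_cancel_right1)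
      finally show ?thesis .
    qed
    ultimately have "(real (c k) - real N * \<mu> k)\<^sup>2 / (real N * \<mu> k) \<le> D\<^sup>2 / a"
      using a(1) by (intro frac_le) auto
    then show ?thesis unfolding g_def using True by simp
  next
    case False then show ?thesis unfolding g_def using a(1) by simp
  qed
  have "(\<Sum>k\<le>K. g k) \<le> (\<Sum>k\<le>K. D\<^sup>2 / a)" using gb by (intro sum_mono) auto
  then have "- (real (Suc K) * D\<^sup>2 / a) \<le> (\<Sum>k\<le>K. f k)" using fs by simp
  then have "exp (- (real (Suc K) * D\<^sup>2 / a)) \<le> exp (\<Sum>k\<le>K. f k)" by simp
  moreover have "0 \<le> pw (\<lambda>k. real (c k) / real N) K c" unfolding pw_def by (intro prod_nonneg) auto
  ultimately have "pw (\<lambda>k. real (c k) / real N) K c * exp (- (real (Suc K) * D\<^sup>2 / a))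
      \<le> pw (\<lambda>k. real (c k) / real N) K c * exp (\<Sum>k\<le>K. f k)" by (intro mult_left_mono)
  then show ?thesis using A by simp
qed

lemma type_lb:
  assumes mu: "\<forall>k. 0 \<le> \<mu> k" "(\<Sum>k\<le>K. \<mu> k) = 1"
    and c: "c \<in> Ty K N" and N: "1 \<le> N"
    and supp: "\<forall>k\<le>K. \<mu> k = 0 \<longrightarrow> c k = 0"
    and a: "0 < a" "\<forall>k\<le>K. 0 < \<mu> k \<longrightarrow> a \<le> \<mu> k"
    and D: "\<forall>k\<le>K. \<bar>real (c k) - real N * \<mu> k\<bar> \<le> D"
  shows "exp (- (real (Suc K) * D\<^sup>2 / a)) / real (Suc N) ^ Suc K \<le> mult K N c * pw \<mu> K c"
proof -
  define E where "E = exp (- (real (Suc K) * D\<^sup>2 / a))"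
  define M where "M = mult K N c * pw (\<lambda>k. real (c k) / real N) K c"
  have m0: "0 \<le> mult K N c" unfolding mult_def by (intro divide_nonneg_nonneg prod_nonneg) auto
  have "1 \<le> real (Suc N) ^ Suc K * M" using type_self_lb[OF c N] M_def by simp
  then have "1 * E \<le> (real (Suc N) ^ Suc K * M) * E" by (intro mult_right_mono) (auto simp: E_def)
  then have "E \<le> real (Suc N) ^ Suc K * (M * E)" by (simp add: mult.assoc)
  moreover have "M * E \<le> mult K N c * pw \<mu> K c"
    using pw_lb[OF mu c N supp a D] m0 unfolding M_def E_def by (simp add: mult.assoc mult_left_mono)
  ultimately have "E \<le> real (Suc N) ^ Suc K * (mult K N c * pw \<mu> K c)"
    by (smt (verit, best) mult_left_mono zero_le_power of_nat_0_le_iff)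
  then show ?thesis unfolding E_def by (simp add: divide_simps mult.commute)
qed


lemma depth_lt_card:
  assumes "planar_tree T" "u \<in> T" shows "length u < card T"
proof -
  have sub: "(\<lambda>t. take t u) ` {..length u} \<subseteq> T" using planar_prefix[OF assms] by auto
  have inj: "inj_on (\<lambda>t. take t u) {..length u}"
  proof (rule inj_onI)
    fix s t assume "s \<in> {..length u}" "t \<in> {..length u}" "take s u = take t u"
    then show "s = t" by (metis atMost_iff length_take min.absorb2)
  qed
  have "card ((\<lambda>t. take t u) ` {..length u}) \<le> card T"
    using sub assms(1) by (intro card_mono) (auto simp: planar_tree_def)
  then show ?thesis using card_image[OF inj] by simp
qed

lemma nchildren_le_card:
  assumes "planar_tree T" shows "nchildren T u \<le> card T"
proof -
  have "inj_on (\<lambda>i. u @ [i]) {i. u @ [i] \<in> T}" by (auto simp: inj_on_def)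
  moreover have "(\<lambda>i. u @ [i]) ` {i. u @ [i] \<in> T} \<subseteq> T" by auto
  ultimately have "card {i. u @ [i] \<in> T} \<le> card T"
    using assms by (metis card_image card_mono planar_tree_def)
  then show ?thesis by (simp add: nchildren_def)
qed

lemma letter_le:
  assumes "planar_tree T" "u \<in> T" "t < length u" shows "u ! t \<le> nchildren T (take t u)"
proof -
  have "take (Suc t) u \<in> T" using planar_prefix[OF assms(1,2)] .
  then have "take t u @ [u ! t] \<in> T" using assms(3) by (simp add: take_Suc_conv_app_nth)
  then show ?thesis using child_iff[OF assms(1)] by blast
qed

lemma finite_trees_of_size: "finite (trees_of_size N)"
proof -
  have "trees_of_size N \<subseteq> Pow {u. set u \<subseteq> {..N} \<and> length u \<le> N}"
  proof
    fix T assume T: "T \<in> trees_of_size N"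
    then have pl: "planar_tree T" and c: "card T = N" by (auto simp: trees_of_size_def)
    have "\<forall>u\<in>T. set u \<subseteq> {..N} \<and> length u \<le> N"
    proof
      fix u assume u: "u \<in> T"
      have "length u \<le> N" using depth_lt_card[OF pl u] c by simp
      moreover have "set u \<subseteq> {..N}"
      proof
        fix x assume "x \<in> set u"
        then obtain t where t: "t < length u" "x = u ! t" by (metis in_set_conv_nth)
        have "u ! t \<le> nchildren T (take t u)" by (rule letter_le[OF pl u t(1)])
        also have "\<dots> \<le> N" using nchildren_le_card[OF pl] c by simp
        finally show "x \<in> {..N}" using t(2) by simp
      qed
      ultimately show "set u \<subseteq> {..N} \<and> length u \<le> N" by simp
    qed
    then show "T \<in> Pow {u. set u \<subseteq> {..N} \<and> length u \<le> N}" by auto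
  qed
  moreover have "finite {u. set u \<subseteq> {..N} \<and> length u \<le> N}"
    by (rule finite_lists_length_le) simp
  ultimately show ?thesis by (meson finite_Pow_iff finite_subset)
qed

lemma weight_nz_nchildren:
  assumes "gw_weight \<mu> T \<noteq> 0" "u \<in> T" "finite T" shows "\<mu> (nchildren T u) \<noteq> 0"
  using assms unfolding gw_weight_def by (metis prod_zero)

lemma tree_in_Tr:
  assumes pl: "planar_tree T" and w: "gw_weight \<mu> T \<noteq> 0" and muK: "\<forall>k>K. \<mu> k = 0"
    and c: "card T = Suc n"
  shows "T \<in> Tr K n"
proof -
  have fin: "finite T" using pl by (simp add: planar_tree_def)
  have "\<forall>u\<in>T. length u \<le> n \<and> set u \<subseteq> {..K}"
  proof
    fix u assume u: "u \<in> T"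
    have "length u \<le> n" using depth_lt_card[OF pl u] c by simp
    moreover have "set u \<subseteq> {..K}"
    proof
      fix x assume "x \<in> set u"
      then obtain t where t: "t < length u" "x = u ! t" by (metis in_set_conv_nth)
      have "take t u \<in> T" using planar_prefix[OF pl u] .
      then have "nchildren T (take t u) \<le> K" using weight_nz_nchildren[OF w _ fin] muK
        by (meson not_le)
      then show "x \<in> {..K}" using letter_le[OF pl u t(1)] t(2) by simp
    qed
    ultimately show "length u \<le> n \<and> set u \<subseteq> {..K}" by simp
  qed
  then show ?thesis using pl by (simp add: Tr_def)
qed

lemma edge_count:
  assumes pl: "planar_tree T" shows "(\<Sum>u\<in>T. nchildren T u) = card T - 1"
proof -
  have fin: "finite T" using pl by (simp add: planar_tree_def)
  have fin2: "\<forall>u\<in>T. finite {i. u @ [i] \<in> T}" using children_eq[OF pl] by simp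
  have "(\<Sum>u\<in>T. nchildren T u) = card (Sigma T (\<lambda>u. {i. u @ [i] \<in> T}))"
    using card_SigmaI[OF fin fin2] by (simp add: nchildren_def)
  also have "\<dots> = card ((\<lambda>(u, i). u @ [i]) ` Sigma T (\<lambda>u. {i. u @ [i] \<in> T}))"
    by (rule card_image[symmetric]) (auto simp: inj_on_def)
  also have "(\<lambda>(u, i). u @ [i]) ` Sigma T (\<lambda>u. {i. u @ [i] \<in> T}) = T - {[]}"
  proof
    show "(\<lambda>(u, i). u @ [i]) ` Sigma T (\<lambda>u. {i. u @ [i] \<in> T}) \<subseteq> T - {[]}" by auto
    show "T - {[]} \<subseteq> (\<lambda>(u, i). u @ [i]) ` Sigma T (\<lambda>u. {i. u @ [i] \<in> T})"
    proof
      fix v assume v: "v \<in> T - {[]}"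
      then have e: "v = butlast v @ [last v]" by simp
      then have "butlast v \<in> T" using v pl unfolding planar_tree_def by (metis DiffD1)
      then show "v \<in> (\<lambda>(u, i). u @ [i]) ` Sigma T (\<lambda>u. {i. u @ [i] \<in> T})"
        using v e by (auto intro!: image_eqI[of _ _ "(butlast v, last v)"])
    qed
  qed
  also have "card (T - {[]}) = card T - 1" using fin pl by (simp add: planar_tree_def)
  finally show ?thesis .
qed

definition ctype :: "nat list set \<Rightarrow> nat \<Rightarrow> nat" where
  "ctype T k = card {u \<in> T. nchildren T u = k}"

lemma ctype_props:
  assumes pl: "planar_tree T" and w: "gw_weight \<mu> T \<noteq> 0" and muK: "\<forall>k>K. \<mu> k = 0"
  shows "(\<Sum>k\<le>K. ctype T k) = card T" "(\<Sum>k\<le>K. k * ctype T k) = card T - 1"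
    "\<forall>k. \<mu> k = 0 \<longrightarrow> ctype T k = 0"
proof -
  have fin: "finite T" using pl by (simp add: planar_tree_def)
  have img: "nchildren T ` T \<subseteq> {..K}"
    using weight_nz_nchildren[OF w _ fin] muK by (meson atMost_iff image_subsetI not_le)
  have "(\<Sum>k\<le>K. \<Sum>u\<in>{u\<in>T. nchildren T u = k}. (1::nat)) = (\<Sum>u\<in>T. 1)"
    by (rule sum.group[OF fin _ img]) simp
  then show "(\<Sum>k\<le>K. ctype T k) = card T" by (simp add: ctype_def)
  have A: "(\<Sum>k\<le>K. \<Sum>u\<in>{u\<in>T. nchildren T u = k}. nchildren T u) = (\<Sum>u\<in>T. nchildren T u)"
    by (rule sum.group[OF fin _ img]) simp
  have B: "(\<Sum>u\<in>{u\<in>T. nchildren T u = k}. nchildren T u) = k * ctype T k" for k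
  proof -
    have "(\<Sum>u\<in>{u\<in>T. nchildren T u = k}. nchildren T u) = (\<Sum>u\<in>{u\<in>T. nchildren T u = k}. k)"
      by (rule sum.cong) auto
    then show ?thesis by (simp add: ctype_def)
  qed
  have "(\<Sum>k\<le>K. k * ctype T k) = (\<Sum>k\<le>K. \<Sum>u\<in>{u\<in>T. nchildren T u = k}. nchildren T u)"
    by (rule sum.cong[OF refl]) (rule B[symmetric])
  then show "(\<Sum>k\<le>K. k * ctype T k) = card T - 1" using A edge_count[OF pl] by simp
  show "\<forall>k. \<mu> k = 0 \<longrightarrow> ctype T k = 0"
  proof (intro allI impI)
    fix k assume "\<mu> k = 0"
    then have "{u \<in> T. nchildren T u = k} = {}" using weight_nz_nchildren[OF w _ fin] by auto
    then show "ctype T k = 0" unfolding ctype_def by (metis card.empty)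
  qed
qed

lemma Wf_1:
  "Wf \<mu> K 1 N = (\<Sum>T\<in>{T\<in>Tr K N. card T = N}. gw_weight \<mu> T)"
proof -
  have "Fo K 1 N = (\<lambda>T. [T]) ` {T\<in>Tr K N. card T = N}"
  proof
    show "Fo K 1 N \<subseteq> (\<lambda>T. [T]) ` {T\<in>Tr K N. card T = N}"
    proof
      fix ts assume ts: "ts \<in> Fo K 1 N"
      then have l: "length ts = 1" "set ts \<subseteq> Tr K N" "sum_list (map card ts) = N"
        by (simp_all add: Fo_def Lk_def)
      obtain T where "ts = [T]" using l(1) by (cases ts) auto
      then have "ts = [T]" "T \<in> Tr K N" "card T = N" using l by auto
      then show "ts \<in> (\<lambda>T. [T]) ` {T\<in>Tr K N. card T = N}" by auto
    qed
    show "(\<lambda>T. [T]) ` {T\<in>Tr K N. card T = N} \<subseteq> Fo K 1 N" by (auto simp: Fo_def Lk_def)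
  qed
  moreover have "inj_on (\<lambda>T. [T]) {T\<in>Tr K N. card T = N}" by (auto simp: inj_on_def)
  ultimately show ?thesis unfolding Wf_def by (simp add: sum.reindex)
qed

lemma size_prob_ge_Wf:
  assumes mu: "\<forall>k. 0 \<le> \<mu> k"
  shows "Wf \<mu> K 1 (Suc n) \<le> gw_size_prob \<mu> n"
  unfolding Wf_1 gw_size_prob_def
  by (intro sum_mono2 finite_trees_of_size) (auto simp: trees_of_size_def Tr_def weight_nonneg mu)


lemma H1_facts:
  assumes "H1 \<mu> K"
  shows "0 < K" "\<forall>k. 0 \<le> \<mu> k" "\<forall>k>K. \<mu> k = 0" "(\<Sum>k\<le>K. \<mu> k) = 1"
    "(\<Sum>k\<le>K. real k * \<mu> k) = 1" "0 < \<mu> 0"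
proof -
  show K: "0 < K" and mu: "\<forall>k. 0 \<le> \<mu> k" and "\<forall>k>K. \<mu> k = 0"
    and s1: "(\<Sum>k\<le>K. \<mu> k) = 1" and s2: "(\<Sum>k\<le>K. real k * \<mu> k) = 1"
    using assms by (auto simp: H1_def)
  have ne: "\<mu> 0 + \<mu> 1 \<noteq> 1" using assms by (simp add: H1_def)
  show "0 < \<mu> 0"
  proof (rule ccontr)
    assume "\<not> 0 < \<mu> 0"
    then have m0: "\<mu> 0 = 0" using mu by (metis le_less)
    have "(\<Sum>k\<le>K. (real k - 1) * \<mu> k) = (\<Sum>k\<le>K. real k * \<mu> k) - (\<Sum>k\<le>K. \<mu> k)"
      by (simp only: left_diff_distrib mult.left_neutral sum_subtractf)
    then have eq0: "(\<Sum>k\<le>K. (real k - 1) * \<mu> k) = 0" using s1 s2 by simp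
    have nn: "\<forall>k\<in>{..K}. 0 \<le> (real k - 1) * \<mu> k"
    proof
      fix k assume "k \<in> {..K}"
      show "0 \<le> (real k - 1) * \<mu> k"
      proof (cases k)
        case 0 then show ?thesis using m0 by simp
      next
        case (Suc j) then show ?thesis using mu by simp
      qed
    qed
    have "((\<Sum>k\<le>K. (real k - 1) * \<mu> k) = 0) = (\<forall>k\<in>{..K}. (real k - 1) * \<mu> k = 0)"
      using nn by (intro sum_nonneg_eq_0_iff) auto
    then have z: "\<forall>k\<in>{..K}. (real k - 1) * \<mu> k = 0" using eq0 by simp
    have "(\<Sum>k\<le>K. \<mu> k) = (\<Sum>k\<le>K. if k = 1 then \<mu> 1 else 0)"
    proof (rule sum.cong[OF refl])
      fix k assume k: "k \<in> {..K}"
      show "\<mu> k = (if k = 1 then \<mu> 1 else 0)"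
      proof (cases "k = 0 \<or> k = 1")
        case True then show ?thesis using m0 by auto
      next
        case False
        then have "real k - 1 \<noteq> 0" by simp
        then show ?thesis using z k False by auto
      qed
    qed
    also have "\<dots> = \<mu> 1" using K by simp
    finally show False using s1 ne m0 by simp
  qed
qed

lemma min_pos:
  fixes \<mu> :: "nat \<Rightarrow> real"
  shows "\<exists>a>0. \<forall>k\<le>K. 0 < \<mu> k \<longrightarrow> a \<le> \<mu> k"
proof (cases "{\<mu> k | k. k \<le> K \<and> 0 < \<mu> k} = {}")
  case True then show ?thesis by (intro exI[of _ 1]) auto
next
  case False
  define a where "a = Min {\<mu> k | k. k \<le> K \<and> 0 < \<mu> k}"
  have fin: "finite {\<mu> k | k. k \<le> K \<and> 0 < \<mu> k}" by simp
  have "a \<in> {\<mu> k | k. k \<le> K \<and> 0 < \<mu> k}" using Min_in[OF fin False] a_def by simp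
  then have "0 < a" by auto
  moreover have "\<forall>k\<le>K. 0 < \<mu> k \<longrightarrow> a \<le> \<mu> k" using Min_le[OF fin] a_def by blast
  ultimately show ?thesis by blast
qed

lemma finite_choice_bound:
  fixes R :: "int set" and P :: "(nat \<Rightarrow> int) \<Rightarrow> int \<Rightarrow> bool"
  assumes "finite R"
  shows "\<exists>D0\<ge>0. \<forall>e\<in>R. (\<exists>x. P x e) \<longrightarrow> (\<exists>x. P x e \<and> (\<forall>k\<le>K. \<bar>x k\<bar> \<le> D0))"
proof -
  define X where "X e = (SOME x. P x e)" for e
  define D0 where "D0 = Max (insert 0 ((\<lambda>(e, k). \<bar>X e k\<bar>) ` (R \<times> {..K})))"
  have fin: "finite (insert 0 ((\<lambda>(e, k). \<bar>X e k\<bar>) ` (R \<times> {..K})))" using assms by simp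
  have "0 \<le> D0" unfolding D0_def using Max_ge[OF fin] by simp
  moreover have "\<forall>e\<in>R. (\<exists>x. P x e) \<longrightarrow> (\<exists>x. P x e \<and> (\<forall>k\<le>K. \<bar>x k\<bar> \<le> D0))"
  proof (intro ballI impI)
    fix e assume e: "e \<in> R" and ex: "\<exists>x. P x e"
    have "P (X e) e" unfolding X_def using ex by (rule someI_ex)
    moreover have "\<forall>k\<le>K. \<bar>X e k\<bar> \<le> D0"
    proof (intro allI impI)
      fix k assume k: "k \<le> K"
      have "\<bar>X e k\<bar> \<in> insert 0 ((\<lambda>(e, k). \<bar>X e k\<bar>) ` (R \<times> {..K}))"
        using e k by (intro insertI2 image_eqI[of _ _ "(e, k)"]) auto
      then show "\<bar>X e k\<bar> \<le> D0" unfolding D0_def using Max_ge[OF fin] by blast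
    qed
    ultimately show "\<exists>x. P x e \<and> (\<forall>k\<le>K. \<bar>x k\<bar> \<le> D0)" by blast
  qed
  ultimately show ?thesis by blast
qed


lemma split0: "(\<Sum>k\<le>K. (f::nat \<Rightarrow> 'a::comm_monoid_add) k) = f 0 + (\<Sum>k\<in>{1..K}. f k)"
proof -
  have "{..K} = insert 0 {1..K}" by auto
  then show ?thesis by simp
qed

lemma good_type:
  assumes H: "H1 \<mu> K"
  shows "\<exists>D N0. \<forall>N\<ge>N0. \<forall>c'. c' \<in> Ty K N \<longrightarrow> (\<Sum>k\<le>K. k * c' k) + 1 = N \<longrightarrow> (\<forall>k\<le>K. \<mu> k = 0 \<longrightarrow> c' k = 0) \<longrightarrow>
     (\<exists>c\<in>Ty K N. (\<Sum>k\<le>K. k * c k) + 1 = N \<and> (\<forall>k\<le>K. \<mu> k = 0 \<longrightarrow> c k = 0) \<and>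
        (\<forall>k\<le>K. \<bar>real (c k) - real N * \<mu> k\<bar> \<le> D))"
proof -
  note F = H1_facts[OF H]
  obtain a where a: "0 < a" "\<forall>k\<le>K. 0 < \<mu> k \<longrightarrow> a \<le> \<mu> k" using min_pos by blast
  define R where "R = {-1 .. int K * int K}"
  define P where "P x e = ((\<forall>k. \<mu> k = 0 \<longrightarrow> x k = 0) \<and> (\<Sum>k\<in>{1..K}. int k * x k) = e)" for x :: "nat \<Rightarrow> int" and e
  obtain D0 where D0: "0 \<le> D0" "\<forall>e\<in>R. (\<exists>x. P x e) \<longrightarrow> (\<exists>x. P x e \<and> (\<forall>k\<le>K. \<bar>x k\<bar> \<le> D0))"
    using finite_choice_bound[of R P K] unfolding R_def by auto
  define d where "d = real_of_int D0"
  have d0: "0 \<le> d" using D0 d_def by simp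
  define N0 :: nat where "N0 = nat \<lceil>(d + 1) / a + real K * (d + 1) / \<mu> 0\<rceil>"
  define D where "D = real (Suc K) * (d + 1)"
  have mu0: "0 < \<mu> 0" using F by simp
  have s1: "(\<Sum>k\<in>{1..K}. real k * \<mu> k) = 1" using F(5) split0[of "\<lambda>k. real k * \<mu> k" K] by simp
  have s0: "(\<Sum>k\<in>{1..K}. \<mu> k) = 1 - \<mu> 0" using F(4) split0[of \<mu> K] by simp
  have main: "\<exists>c\<in>Ty K N. (\<Sum>k\<le>K. k * c k) + 1 = N \<and> (\<forall>k\<le>K. \<mu> k = 0 \<longrightarrow> c k = 0) \<and>
        (\<forall>k\<le>K. \<bar>real (c k) - real N * \<mu> k\<bar> \<le> D)"
    if N: "N \<ge> N0" and c': "c' \<in> Ty K N" "(\<Sum>k\<le>K. k * c' k) + 1 = N" "\<forall>k\<le>K. \<mu> k = 0 \<longrightarrow> c' k = 0" for N c'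
  proof -
    have NN0: "(d + 1) / a + real K * (d + 1) / \<mu> 0 \<le> real N"
      using N unfolding N0_def by linarith
    have t1: "0 \<le> real K * (d + 1) / \<mu> 0" using d0 mu0 by simp
    have t2: "0 \<le> (d + 1) / a" using d0 a by simp
    have NA: "d + 1 \<le> real N * a"
    proof -
      have "(d + 1) / a \<le> real N" using NN0 t1 by linarith
      then show ?thesis using a(1) by (simp add: divide_le_eq)
    qed
    have NB: "real K * (d + 1) \<le> real N * \<mu> 0"
    proof -
      have "real K * (d + 1) / \<mu> 0 \<le> real N" using NN0 t2 by linarith
      then show ?thesis using mu0 by (simp add: divide_le_eq)
    qed
    define b where "b k = \<lfloor>real N * \<mu> k\<rfloor>" for k
    have b0: "\<mu> k = 0 \<Longrightarrow> b k = 0" for k by (simp add: b_def)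
    have bl: "real_of_int (b k) \<le> real N * \<mu> k" for k unfolding b_def by simp
    have bg: "real N * \<mu> k - 1 < real_of_int (b k)" for k unfolding b_def by linarith
    define e where "e = int N - 1 - (\<Sum>k\<in>{1..K}. int k * b k)"
    have re: "real_of_int (\<Sum>k\<in>{1..K}. int k * b k) = (\<Sum>k\<in>{1..K}. real k * real_of_int (b k))" by simp
    have up: "(\<Sum>k\<in>{1..K}. real k * real_of_int (b k)) \<le> real N"
    proof -
      have "(\<Sum>k\<in>{1..K}. real k * real_of_int (b k)) \<le> (\<Sum>k\<in>{1..K}. real k * (real N * \<mu> k))"
        by (intro sum_mono mult_left_mono bl) auto
      also have "\<dots> = real N * (\<Sum>k\<in>{1..K}. real k * \<mu> k)" by (simp add: sum_distrib_left algebra_simps)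
      finally show ?thesis using s1 by simp
    qed
    have lo: "real N - real K * real K \<le> (\<Sum>k\<in>{1..K}. real k * real_of_int (b k))"
    proof -
      have "(\<Sum>k\<in>{1..K}. real k * (real N * \<mu> k - 1)) \<le> (\<Sum>k\<in>{1..K}. real k * real_of_int (b k))"
        using bg by (intro sum_mono mult_left_mono) (auto simp: less_imp_le)
      moreover have "(\<Sum>k\<in>{1..K}. real k * (real N * \<mu> k - 1)) = real N * (\<Sum>k\<in>{1..K}. real k * \<mu> k) - (\<Sum>k\<in>{1..K}. real k)"
        by (simp add: sum_distrib_left sum_subtractf algebra_simps)
      then have "(\<Sum>k\<in>{1..K}. real k * (real N * \<mu> k - 1)) = real N - (\<Sum>k\<in>{1..K}. real k)"
        using s1 by simp
      moreover have "(\<Sum>k\<in>{1..K}. real k) \<le> real K * real K"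
      proof -
        have "(\<Sum>k\<in>{1..K}. real k) \<le> (\<Sum>k\<in>{1..K}. real K)" by (intro sum_mono) auto
        then show ?thesis by simp
      qed
      ultimately show ?thesis using s1 by linarith
    qed
    have eR: "e \<in> R"
    proof -
      have "real_of_int e = real N - 1 - (\<Sum>k\<in>{1..K}. real k * real_of_int (b k))"
        unfolding e_def using re by simp
      then have h1: "-1 \<le> real_of_int e" "real_of_int e \<le> real K * real K" using up lo by linarith+
      then have "real_of_int e \<le> real_of_int (int K * int K)" by simp
      then have "e \<le> int K * int K" by (simp only: of_int_le_iff)
      moreover have "-1 \<le> e" using h1(1) by linarith
      ultimately show ?thesis unfolding R_def by simp
    qed
    define x' where "x' k = (if \<mu> k = 0 then 0 else int (c' k) - b k)" for k
    have Px': "P x' e"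
    proof -
      have "(\<Sum>k\<in>{1..K}. int k * x' k) = (\<Sum>k\<in>{1..K}. int k * int (c' k) - int k * b k)"
      proof (rule sum.cong[OF refl])
        fix k assume k: "k \<in> {1..K}"
        show "int k * x' k = int k * int (c' k) - int k * b k"
        proof (cases "\<mu> k = 0")
          case True then show ?thesis using c'(3) k b0 by (simp add: x'_def)
        qed (simp add: x'_def algebra_simps)
      qed
      also have "\<dots> = int (\<Sum>k\<in>{1..K}. k * c' k) - (\<Sum>k\<in>{1..K}. int k * b k)"
        by (simp add: sum_subtractf)
      also have "(\<Sum>k\<in>{1..K}. k * c' k) = N - 1" using c'(2) split0[of "\<lambda>k. k * c' k" K] by simp
      finally have "(\<Sum>k\<in>{1..K}. int k * x' k) = e" unfolding e_def using c'(2) by simp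
      then show ?thesis unfolding P_def x'_def by simp
    qed
    obtain x where x: "P x e" "\<forall>k\<le>K. \<bar>x k\<bar> \<le> D0" using D0(2) eR Px' by blast
    have x0: "\<mu> k = 0 \<Longrightarrow> x k = 0" for k using x(1) by (simp add: P_def)
    have xs: "(\<Sum>k\<in>{1..K}. int k * x k) = e" using x(1) by (simp add: P_def)
    have xd: "\<bar>real_of_int (x k)\<bar> \<le> d" if "k \<le> K" for k using x(2) that d_def by (simp del: of_int_abs add: of_int_abs[symmetric])
    have bx: "0 \<le> b k + x k" if k: "k \<le> K" for k
    proof (cases "\<mu> k = 0")
      case True then show ?thesis using b0 x0 by simp
    next
      case False
      then have "a \<le> \<mu> k" using a(2) k F(2) by (metis le_less)
      then have "real N * a \<le> real N * \<mu> k" by (intro mult_left_mono) auto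
      then have "d \<le> real_of_int (b k)" using NA bg[of k] by linarith
      moreover have "- d \<le> real_of_int (x k)" using xd[OF k] by linarith
      ultimately have "0 \<le> real_of_int (b k + x k)" by simp
      then show ?thesis by linarith
    qed
    define s where "s = (\<Sum>k\<in>{1..K}. b k + x k)"
    have sN: "s \<le> int N"
    proof -
      have "real_of_int s = (\<Sum>k\<in>{1..K}. real_of_int (b k) + real_of_int (x k))" unfolding s_def by simp
      also have "\<dots> \<le> (\<Sum>k\<in>{1..K}. real N * \<mu> k + d)"
        using bl xd by (intro sum_mono add_mono) (auto simp: abs_le_iff)
      also have "\<dots> = real N * (1 - \<mu> 0) + real K * d" using s0 by (simp add: sum.distrib sum_distrib_left[symmetric])
      also have "\<dots> \<le> real N" using NB d0 by (simp add: algebra_simps)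
      finally show ?thesis by linarith
    qed
    define c where "c k = (if k = 0 then nat (int N - s) else if k \<le> K then nat (b k + x k) else 0)" for k
    have cK: "\<forall>k>K. c k = 0" unfolding c_def by simp
    have ci: "int (c k) = b k + x k" if "1 \<le> k" "k \<le> K" for k using that bx by (simp add: c_def)
    have c0: "int (c 0) = int N - s" using sN by (simp add: c_def)
    have sum_c: "(\<Sum>k\<le>K. c k) = N"
    proof -
      have "int (\<Sum>k\<le>K. c k) = int (c 0) + (\<Sum>k\<in>{1..K}. int (c k))" using split0[of c K] by simp
      also have "(\<Sum>k\<in>{1..K}. int (c k)) = s" unfolding s_def by (intro sum.cong refl) (simp add: ci)
      finally have "int (\<Sum>k\<le>K. c k) = int N" using c0 by simp
      then show ?thesis by (simp only: of_nat_eq_iff)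
    qed
    have wsum_c: "(\<Sum>k\<le>K. k * c k) + 1 = N"
    proof -
      have "int (\<Sum>k\<le>K. k * c k) = (\<Sum>k\<in>{1..K}. int k * int (c k))" using split0[of "\<lambda>k. k * c k" K] by simp
      also have "\<dots> = (\<Sum>k\<in>{1..K}. int k * b k + int k * x k)" by (intro sum.cong refl) (simp add: ci algebra_simps)
      also have "\<dots> = (\<Sum>k\<in>{1..K}. int k * b k) + e" using xs by (simp add: sum.distrib)
      also have "\<dots> = int N - 1" unfolding e_def by simp
      finally show ?thesis using c'(2) by linarith
    qed
    have supp: "\<forall>k\<le>K. \<mu> k = 0 \<longrightarrow> c k = 0"
    proof (intro allI impI)
      fix k assume k: "k \<le> K" and m: "\<mu> k = 0"
      have "k \<noteq> 0" using mu0 m by (metis less_irrefl)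
      then show "c k = 0" using k m b0 x0 by (simp add: c_def)
    qed
    have bnd: "\<bar>real (c k) - real N * \<mu> k\<bar> \<le> D" if k: "k \<le> K" for k
    proof (cases "k = 0")
      case False
      have i: "int (c k) = b k + x k" using ci[of k] False k by simp
      have "real (c k) = real_of_int (int (c k))" by simp
      then have "real (c k) = real_of_int (b k) + real_of_int (x k)" using i by simp
      then have "\<bar>real (c k) - real N * \<mu> k\<bar> \<le> 1 + d" using bl[of k] bg[of k] xd[OF k] by (simp add: abs_le_iff)
      also have "\<dots> \<le> D" unfolding D_def using d0 by (simp add: algebra_simps)
      finally show ?thesis .
    next
      case True
      have "real (c 0) - real N * \<mu> 0 = (\<Sum>k\<in>{1..K}. real N * \<mu> k - real_of_int (b k) - real_of_int (x k))"
      proof -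
        have "real (c 0) = real_of_int (int (c 0))" by simp
        then have "real (c 0) = real N - real_of_int s" using c0 by simp
        moreover have "real_of_int s = (\<Sum>k\<in>{1..K}. real_of_int (b k) + real_of_int (x k))" unfolding s_def by simp
        moreover have "(\<Sum>k\<in>{1..K}. real N * \<mu> k) = real N * (1 - \<mu> 0)" using s0 by (simp add: sum_distrib_left[symmetric])
        ultimately show ?thesis by (simp add: sum_subtractf algebra_simps)
      qed
      also have "\<bar>\<dots>\<bar> \<le> (\<Sum>k\<in>{1..K}. \<bar>real N * \<mu> k - real_of_int (b k) - real_of_int (x k)\<bar>)"
        by (rule sum_abs)
      also have "\<dots> \<le> (\<Sum>k\<in>{1..K}. 1 + d)"
      proof (intro sum_mono)
        fix k assume "k \<in> {1..K}"
        then have "k \<le> K" by simp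
        then show "\<bar>real N * \<mu> k - real_of_int (b k) - real_of_int (x k)\<bar> \<le> 1 + d"
          using bl[of k] bg[of k] xd[of k] by (simp add: abs_le_iff)
      qed
      also have "\<dots> = real K * (1 + d)" by simp
      also have "\<dots> \<le> D" unfolding D_def using d0 by (simp add: algebra_simps)
      finally show ?thesis using True by simp
    qed
    have "c \<in> Ty K N" using cK sum_c by (simp add: Ty_def)
    then show ?thesis using wsum_c supp bnd by blast
  qed
  show ?thesis by (intro exI[of _ D] exI[of _ N0]) (use main in blast)
qed


lemma Z_lb:
  assumes H: "H1 \<mu> K"
  shows "\<exists>E>0. \<exists>N1. \<forall>n\<ge>N1. gw_size_prob \<mu> n > 0 \<longrightarrow> E / real (n + 2) ^ (K + 2) \<le> gw_size_prob \<mu> n"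
proof -
  note F = H1_facts[OF H]
  obtain D N0 where G: "\<forall>N\<ge>N0. \<forall>c'. c' \<in> Ty K N \<longrightarrow> (\<Sum>k\<le>K. k * c' k) + 1 = N \<longrightarrow> (\<forall>k\<le>K. \<mu> k = 0 \<longrightarrow> c' k = 0) \<longrightarrow>
     (\<exists>c\<in>Ty K N. (\<Sum>k\<le>K. k * c k) + 1 = N \<and> (\<forall>k\<le>K. \<mu> k = 0 \<longrightarrow> c k = 0) \<and>
        (\<forall>k\<le>K. \<bar>real (c k) - real N * \<mu> k\<bar> \<le> D))"
    using good_type[OF H] by blast
  obtain a where a: "0 < a" "\<forall>k\<le>K. 0 < \<mu> k \<longrightarrow> a \<le> \<mu> k" using min_pos by blast
  define E where "E = exp (- (real (Suc K) * D\<^sup>2 / a))"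
  have E0: "0 < E" unfolding E_def by simp
  have main: "E / real (n + 2) ^ (K + 2) \<le> gw_size_prob \<mu> n"
    if n: "n \<ge> N0" and pos: "gw_size_prob \<mu> n > 0" for n
  proof -
    define N where "N = Suc n"
    have "\<exists>T\<in>trees_of_size N. gw_weight \<mu> T \<noteq> 0"
    proof (rule ccontr)
      assume "\<not> (\<exists>T\<in>trees_of_size N. gw_weight \<mu> T \<noteq> 0)"
      then have "gw_size_prob \<mu> n = 0" unfolding gw_size_prob_def N_def by simp
      then show False using pos by simp
    qed
    then obtain T where T: "T \<in> trees_of_size N" "gw_weight \<mu> T \<noteq> 0" by blast
    have pl: "planar_tree T" and cT: "card T = N" using T(1) by (auto simp: trees_of_size_def)
    note ct = ctype_props[OF pl T(2) F(3)]
    have c'Ty: "ctype T \<in> Ty K N"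
    proof -
      have "\<forall>k>K. ctype T k = 0" using ct(3) F(3) by blast
      then show ?thesis using ct(1) cT by (simp add: Ty_def)
    qed
    have c'w: "(\<Sum>k\<le>K. k * ctype T k) + 1 = N" using ct(2) cT N_def by simp
    have c's: "\<forall>k\<le>K. \<mu> k = 0 \<longrightarrow> ctype T k = 0" using ct(3) by blast
    obtain c where c: "c \<in> Ty K N" "(\<Sum>k\<le>K. k * c k) + 1 = N" "\<forall>k\<le>K. \<mu> k = 0 \<longrightarrow> c k = 0"
        "\<forall>k\<le>K. \<bar>real (c k) - real N * \<mu> k\<bar> \<le> D"
    proof -
      have "N0 \<le> N" using n N_def by simp
      then show ?thesis using G c'Ty c'w c's that by blast
    qed
    have N1: "1 \<le> N" unfolding N_def by simp
    have tl: "E / real (Suc N) ^ Suc K \<le> mult K N c * pw \<mu> K c"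
      unfolding E_def by (rule type_lb[OF F(2) F(4) c(1) N1 c(3) a c(4)])
    have "mult K N c * pw \<mu> K c \<le> Qs \<mu> K 1 N"
      unfolding Qs_def
    proof (rule member_le_sum)
      show "c \<in> {c \<in> Ty K N. (\<Sum>k\<le>K. k * c k) + 1 = N}" using c by simp
      show "finite {c \<in> Ty K N. (\<Sum>k\<le>K. k * c k) + 1 = N}" using finite_Ty by simp
      fix x assume "x \<in> {c \<in> Ty K N. (\<Sum>k\<le>K. k * c k) + 1 = N} - {c}"
      show "0 \<le> mult K N x * pw \<mu> K x" unfolding mult_def pw_def using F(2)
        by (intro mult_nonneg_nonneg divide_nonneg_nonneg prod_nonneg) auto
    qed
    also have "Qs \<mu> K 1 N \<le> real N * Wf \<mu> K 1 N" using W_Q[OF F(2), of 1 K N] by simp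
    also have "Wf \<mu> K 1 N \<le> gw_size_prob \<mu> n" unfolding N_def by (rule size_prob_ge_Wf[OF F(2)])
    finally have A: "E / real (Suc N) ^ Suc K \<le> real N * gw_size_prob \<mu> n"
      using tl N1 by (smt (verit, best) mult_left_mono of_nat_0_le_iff)
    have NN: "real N * real (Suc N) ^ Suc K \<le> real (n + 2) ^ (K + 2)" unfolding N_def by simp
    have pN: "0 < real (Suc N) ^ Suc K" by simp
    have "E \<le> real N * real (Suc N) ^ Suc K * gw_size_prob \<mu> n"
      using A pN by (simp add: divide_le_eq algebra_simps)
    also have "\<dots> \<le> real (n + 2) ^ (K + 2) * gw_size_prob \<mu> n"
      using NN pos by (intro mult_right_mono) auto
    finally show ?thesis by (simp add: divide_le_eq mult.commute)
  qed
  show ?thesis using E0 main by blast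
qed


lemma cnt_drop_card: "cnt p (drop d xs) = card {t. d \<le> t \<and> t < length xs \<and> xs ! t = p}"
proof -
  have "cnt p (drop d xs) = card {i. i < length (drop d xs) \<and> drop d xs ! i = p}"
    unfolding cnt_def by (rule length_filter_conv_card)
  also have "\<dots> = card ((\<lambda>i. d + i) ` {i. i < length (drop d xs) \<and> drop d xs ! i = p})"
    by (rule card_image[symmetric]) (auto simp: inj_on_def)
  also have "(\<lambda>i. d + i) ` {i. i < length (drop d xs) \<and> drop d xs ! i = p} = {t. d \<le> t \<and> t < length xs \<and> xs ! t = p}"
  proof
    show "(\<lambda>i. d + i) ` {i. i < length (drop d xs) \<and> drop d xs ! i = p} \<subseteq> {t. d \<le> t \<and> t < length xs \<and> xs ! t = p}"
      by auto
    show "{t. d \<le> t \<and> t < length xs \<and> xs ! t = p} \<subseteq> (\<lambda>i. d + i) ` {i. i < length (drop d xs) \<and> drop d xs ! i = p}"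
    proof
      fix t assume t: "t \<in> {t. d \<le> t \<and> t < length xs \<and> xs ! t = p}"
      then show "t \<in> (\<lambda>i. d + i) ` {i. i < length (drop d xs) \<and> drop d xs ! i = p}"
        by (intro image_eqI[of _ _ "t - d"]) auto
    qed
  qed
  finally show ?thesis .
qed

lemma A_count_l_cnt:
  assumes pl: "planar_tree T" and u: "u \<in> T"
  shows "A_count_l T u l k j = cnt (k, j) (drop (length u - l) (pairs T u))"
proof -
  define S where "S = {t. length u - l \<le> t \<and> t < length u \<and> pairs T u ! t = (k, j)}"
  have S': "S = {t. t < length u \<and> nchildren T (take t u) = k \<and> u ! t = j \<and> length u - t \<le> l}"
    unfolding S_def pairs_def by auto
  have "{v. v \<in> T \<and> nchildren T v = k \<and> (\<exists>w. u = v @ j # w) \<and> length u - length v \<le> l} = (\<lambda>t. take t u) ` S"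
  proof
    show "{v. v \<in> T \<and> nchildren T v = k \<and> (\<exists>w. u = v @ j # w) \<and> length u - length v \<le> l} \<subseteq> (\<lambda>t. take t u) ` S"
    proof
      fix v assume v: "v \<in> {v. v \<in> T \<and> nchildren T v = k \<and> (\<exists>w. u = v @ j # w) \<and> length u - length v \<le> l}"
      then obtain w where w: "u = v @ j # w" by blast
      have h: "length v < length u" "take (length v) u = v" "u ! length v = j" using w by auto
      have v2: "nchildren T v = k" "length u - length v \<le> l" using v by auto
      have "length v \<in> S" unfolding S' using h v2 by simp
      then show "v \<in> (\<lambda>t. take t u) ` S" using h(2) by (metis image_eqI)
    qed
    show "(\<lambda>t. take t u) ` S \<subseteq> {v. v \<in> T \<and> nchildren T v = k \<and> (\<exists>w. u = v @ j # w) \<and> length u - length v \<le> l}"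
    proof
      fix v assume "v \<in> (\<lambda>t. take t u) ` S"
      then obtain t where t: "t \<in> S" "v = take t u" by blast
      then have tl: "t < length u" "nchildren T (take t u) = k" "u ! t = j" "length u - t \<le> l" unfolding S' by auto
      have "u = take t u @ u ! t # drop (Suc t) u" using tl(1) by (simp add: id_take_nth_drop)
      then have "\<exists>w. u = v @ j # w" using t(2) tl(3) by auto
      moreover have "v \<in> T" using planar_prefix[OF pl u] t(2) by simp
      ultimately show "v \<in> {v. v \<in> T \<and> nchildren T v = k \<and> (\<exists>w. u = v @ j # w) \<and> length u - length v \<le> l}"
        using t(2) tl by simp
    qed
  qed
  moreover have "inj_on (\<lambda>t. take t u) S"
  proof (rule inj_onI)
    fix s t assume s: "s \<in> S" and t: "t \<in> S" and e: "take s u = take t u"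
    have "s < length u" "t < length u" using s t unfolding S_def by auto
    then have "length (take s u) = s" "length (take t u) = t" by simp_all
    then show "s = t" using e by simp
  qed
  ultimately have "A_count_l T u l k j = card S" unfolding A_count_l_def by (simp add: card_image)
  also have "\<dots> = cnt (k, j) (drop (length u - l) (pairs T u))"
    unfolding cnt_drop_card S_def by (simp add: pairs_def)
  finally show ?thesis .
qed

lemma A_count_cnt:
  assumes pl: "planar_tree T" and u: "u \<in> T"
  shows "A_count T u k j = cnt (k, j) (pairs T u)"
proof -
  have "A_count T u k j = A_count_l T u (length u) k j"
    unfolding A_count_def A_count_l_def by simp
  then show ?thesis using A_count_l_cnt[OF pl u, of "length u" k j] by simp
qed

lemma generic_bound:
  assumes H: "H1 \<mu> K" and fin: "finite I" and Bnn: "\<forall>i s. 0 \<le> B i s"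
    and cover: "\<forall>T\<in>Tr K n. E T \<longrightarrow> 1 \<le> (\<Sum>i\<in>I. \<Sum>u\<in>{u \<in> T. length u = h i}. B i (pairs T u))"
  shows "(\<Sum>T\<in>{T\<in>trees_of_size (Suc n). E T}. gw_weight \<mu> T) \<le> (\<Sum>i\<in>I. lsum \<mu> K (h i) (B i))"
proof -
  note F = H1_facts[OF H]
  define S where "S T = (\<Sum>i\<in>I. \<Sum>u\<in>{u \<in> T. length u = h i}. B i (pairs T u))" for T
  have S0: "0 \<le> S T" for T unfolding S_def using Bnn by (intro sum_nonneg) auto
  have w0: "0 \<le> gw_weight \<mu> T" for T by (rule weight_nonneg[OF F(2)])
  have finA: "finite {T\<in>trees_of_size (Suc n). E T}" using finite_trees_of_size by simp
  have "(\<Sum>T\<in>{T\<in>trees_of_size (Suc n). E T}. gw_weight \<mu> T)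
      = (\<Sum>T\<in>{T\<in>trees_of_size (Suc n). E T \<and> gw_weight \<mu> T \<noteq> 0}. gw_weight \<mu> T)"
    by (rule sum.mono_neutral_right) (use finA in auto)
  also have "\<dots> \<le> (\<Sum>T\<in>{T\<in>Tr K n. E T}. gw_weight \<mu> T)"
  proof (rule sum_mono2)
    show "finite {T \<in> Tr K n. E T}" using finite_Tr by simp
    show "{T \<in> trees_of_size (Suc n). E T \<and> gw_weight \<mu> T \<noteq> 0} \<subseteq> {T \<in> Tr K n. E T}"
      using tree_in_Tr[OF _ _ F(3)] by (auto simp: trees_of_size_def)
  qed (simp add: w0)
  also have "\<dots> \<le> (\<Sum>T\<in>{T\<in>Tr K n. E T}. gw_weight \<mu> T * S T)"
  proof (rule sum_mono)
    fix T assume T: "T \<in> {T\<in>Tr K n. E T}"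
    then have "1 \<le> S T" using cover unfolding S_def by blast
    then have "gw_weight \<mu> T * 1 \<le> gw_weight \<mu> T * S T" using w0 by (intro mult_left_mono) auto
    then show "gw_weight \<mu> T \<le> gw_weight \<mu> T * S T" by simp
  qed
  also have "\<dots> \<le> (\<Sum>T\<in>Tr K n. gw_weight \<mu> T * S T)"
    by (rule sum_mono2) (auto simp: finite_Tr w0 S0)
  also have "\<dots> = (\<Sum>i\<in>I. \<Sum>T\<in>Tr K n. gw_weight \<mu> T * (\<Sum>u\<in>{u \<in> T. length u = h i}. B i (pairs T u)))"
    unfolding S_def by (simp add: sum_distrib_left sum.swap[of _ I])
  also have "\<dots> \<le> (\<Sum>i\<in>I. lsum \<mu> K (h i) (B i))"
    using F(2,4) Bnn by (intro sum_mono spine) auto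
  finally show ?thesis .
qed


lemma chernoff_gamma:
  assumes H: "H1 \<mu> K" and g: "0 < \<gamma>" and n: "2 \<le> n" and p: "1 \<le> j" "j \<le> k" "k \<le> K" and h: "1 \<le> h"
  shows "lsum \<mu> K h (\<lambda>s. if \<gamma> * sqrt (real h * ln (real n)) \<le> \<bar>real (cnt (k, j) s) - \<mu> k * real h\<bar> then 1 else 0)
     \<le> 2 * exp (- (\<gamma>\<^sup>2 * ln (real n) / 4))"
proof -
  note F = H1_facts[OF H]
  have ln0: "0 < ln (real n)" using n by simp
  have hp: "0 < real h" using h by simp
  define t where "t = \<gamma> * sqrt (real h * ln (real n))"
  have t0: "0 < t" unfolding t_def using g ln0 hp by simp
  have "t\<^sup>2 = \<gamma>\<^sup>2 * (real h * ln (real n))" unfolding t_def using ln0 hp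
    by (simp add: power_mult_distrib)
  then have tt: "t\<^sup>2 / (4 * real h) = \<gamma>\<^sup>2 * ln (real n) / 4" using hp by (simp add: field_simps)
  show ?thesis using chernoff[OF F(2) F(5) p h t0] tt unfolding t_def by simp
qed

lemma part1_bound:
  assumes H: "H1 \<mu> K" and g: "0 < \<gamma>" and n: "2 \<le> n"
  shows "(\<Sum>T\<in>{T\<in>trees_of_size (Suc n). \<exists>k j u. 1 \<le> j \<and> j \<le> k \<and> k \<le> K \<and> u \<in> T - {[]} \<and>
               \<bar>real (A_count T u k j) - \<mu> k * real (length u)\<bar>
                 \<ge> \<gamma> * sqrt (real (length u) * ln (real n))}. gw_weight \<mu> T)
     \<le> real ((K + 1) * (K + 1) * n) * (2 * exp (- (\<gamma>\<^sup>2 * ln (real n) / 4)))"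
proof -
  note F = H1_facts[OF H]
  define I where "I = {..K} \<times> {..K} \<times> {1..n}"
  define hh where "hh i = snd (snd i)" for i :: "nat \<times> nat \<times> nat"
  define B where "B i s = (if 1 \<le> fst (snd i) \<and> fst (snd i) \<le> fst i \<and>
      \<gamma> * sqrt (real (hh i) * ln (real n)) \<le> \<bar>real (cnt (fst i, fst (snd i)) s) - \<mu> (fst i) * real (hh i)\<bar> then 1 else (0::real))" for i s
  have Bnn: "\<forall>i s. 0 \<le> B i s" unfolding B_def by simp
  have finI: "finite I" unfolding I_def by simp
  have cover: "\<forall>T\<in>Tr K n. (\<exists>k j u. 1 \<le> j \<and> j \<le> k \<and> k \<le> K \<and> u \<in> T - {[]} \<and>
               \<bar>real (A_count T u k j) - \<mu> k * real (length u)\<bar>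
                 \<ge> \<gamma> * sqrt (real (length u) * ln (real n))) \<longrightarrow>
      1 \<le> (\<Sum>i\<in>I. \<Sum>u\<in>{u \<in> T. length u = hh i}. B i (pairs T u))"
  proof (intro ballI impI)
    fix T assume T: "T \<in> Tr K n"
    assume "\<exists>k j u. 1 \<le> j \<and> j \<le> k \<and> k \<le> K \<and> u \<in> T - {[]} \<and>
               \<bar>real (A_count T u k j) - \<mu> k * real (length u)\<bar>
                 \<ge> \<gamma> * sqrt (real (length u) * ln (real n))"
    then obtain k j u where kju: "1 \<le> j" "j \<le> k" "k \<le> K" "u \<in> T" "u \<noteq> []"
      "\<gamma> * sqrt (real (length u) * ln (real n)) \<le> \<bar>real (A_count T u k j) - \<mu> k * real (length u)\<bar>" by blast
    have pl: "planar_tree T" using T by (simp add: Tr_def)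
    have lu: "length u \<le> n" using T kju(4) by (simp add: Tr_def)
    define i where "i = (k, j, length u)"
    have iI: "i \<in> I" unfolding i_def I_def using kju lu by (simp add: Suc_leI)
    have Bi: "B i (pairs T u) = 1"
      unfolding B_def i_def hh_def using kju A_count_cnt[OF pl kju(4)] by simp
    have fin_u: "finite {u \<in> T. length u = hh i}" using pl by (simp add: planar_tree_def)
    have "1 \<le> (\<Sum>u\<in>{u \<in> T. length u = hh i}. B i (pairs T u))"
      using member_le_sum[of u "{u \<in> T. length u = hh i}" "\<lambda>u. B i (pairs T u)"] Bnn fin_u kju(4) Bi
      unfolding hh_def i_def by simp
    also have "\<dots> \<le> (\<Sum>i\<in>I. \<Sum>u\<in>{u \<in> T. length u = hh i}. B i (pairs T u))"
      using iI finI Bnn by (intro member_le_sum sum_nonneg) auto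
    finally show "1 \<le> (\<Sum>i\<in>I. \<Sum>u\<in>{u \<in> T. length u = hh i}. B i (pairs T u))" .
  qed
  have "(\<Sum>T\<in>{T\<in>trees_of_size (Suc n). \<exists>k j u. 1 \<le> j \<and> j \<le> k \<and> k \<le> K \<and> u \<in> T - {[]} \<and>
               \<bar>real (A_count T u k j) - \<mu> k * real (length u)\<bar>
                 \<ge> \<gamma> * sqrt (real (length u) * ln (real n))}. gw_weight \<mu> T)
      \<le> (\<Sum>i\<in>I. lsum \<mu> K (hh i) (B i))"
    by (rule generic_bound[OF H finI Bnn cover])
  also have "\<dots> \<le> (\<Sum>i\<in>I. 2 * exp (- (\<gamma>\<^sup>2 * ln (real n) / 4)))"
  proof (rule sum_mono)
    fix i assume iI: "i \<in> I"
    obtain k j h where i: "i = (k, j, h)" by (cases i) auto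
    have kh: "k \<le> K" "1 \<le> h" using iI i I_def by auto
    show "lsum \<mu> K (hh i) (B i) \<le> 2 * exp (- (\<gamma>\<^sup>2 * ln (real n) / 4))"
    proof (cases "1 \<le> j \<and> j \<le> k")
      case True
      have "B i = (\<lambda>s. if \<gamma> * sqrt (real h * ln (real n)) \<le> \<bar>real (cnt (k, j) s) - \<mu> k * real h\<bar> then 1 else 0)"
        unfolding B_def i hh_def using True by auto
      then show ?thesis using chernoff_gamma[OF H g n _ _ kh(1) kh(2)] True i hh_def by simp
    next
      case False
      then have "B i = (\<lambda>s. 0)" unfolding B_def i by auto
      then show ?thesis using lsum_const[OF F(5), of "hh i" 0] by simp
    qed
  qed
  also have "\<dots> = real (card I) * (2 * exp (- (\<gamma>\<^sup>2 * ln (real n) / 4)))" by simp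
  also have "card I = (K + 1) * (K + 1) * n" unfolding I_def by (simp add: card_cartesian_product algebra_simps)
  finally show ?thesis .
qed

lemma part2_bound:
  assumes H: "H1 \<mu> K" and g: "0 < \<gamma>" and n: "2 \<le> n"
  shows "(\<Sum>T\<in>{T\<in>trees_of_size (Suc n). \<exists>k j u l. 1 \<le> j \<and> j \<le> k \<and> k \<le> K \<and> u \<in> T \<and>
               0 < l \<and> l \<le> length u \<and>
               \<bar>real (A_count_l T u l k j) - \<mu> k * real l\<bar>
                 \<ge> \<gamma> * sqrt (real l * ln (real n))}. gw_weight \<mu> T)
     \<le> real ((K + 1) * (K + 1) * n * n) * (2 * exp (- (\<gamma>\<^sup>2 * ln (real n) / 4)))"
proof -
  note F = H1_facts[OF H]
  define I where "I = {..K} \<times> {..K} \<times> {1..n} \<times> {1..n}"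
  define hh where "hh i = fst (snd (snd i))" for i :: "nat \<times> nat \<times> nat \<times> nat"
  define ll where "ll i = snd (snd (snd i))" for i :: "nat \<times> nat \<times> nat \<times> nat"
  define f where "f i s = (if \<gamma> * sqrt (real (ll i) * ln (real n)) \<le> \<bar>real (cnt (fst i, fst (snd i)) s) - \<mu> (fst i) * real (ll i)\<bar> then 1 else (0::real))" for i s
  define B where "B i s = (if 1 \<le> fst (snd i) \<and> fst (snd i) \<le> fst i \<and> ll i \<le> hh i \<and> 1 \<le> ll i
      then f i (drop (hh i - ll i) s) else 0)" for i s
  have Bnn: "\<forall>i s. 0 \<le> B i s" unfolding B_def f_def by simp
  have finI: "finite I" unfolding I_def by simp
  have cover: "\<forall>T\<in>Tr K n. (\<exists>k j u l. 1 \<le> j \<and> j \<le> k \<and> k \<le> K \<and> u \<in> T \<and>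
               0 < l \<and> l \<le> length u \<and>
               \<bar>real (A_count_l T u l k j) - \<mu> k * real l\<bar>
                 \<ge> \<gamma> * sqrt (real l * ln (real n))) \<longrightarrow>
      1 \<le> (\<Sum>i\<in>I. \<Sum>u\<in>{u \<in> T. length u = hh i}. B i (pairs T u))"
  proof (intro ballI impI)
    fix T assume T: "T \<in> Tr K n"
    assume "\<exists>k j u l. 1 \<le> j \<and> j \<le> k \<and> k \<le> K \<and> u \<in> T \<and>
               0 < l \<and> l \<le> length u \<and>
               \<bar>real (A_count_l T u l k j) - \<mu> k * real l\<bar>
                 \<ge> \<gamma> * sqrt (real l * ln (real n))"
    then obtain k j u l where kju: "1 \<le> j" "j \<le> k" "k \<le> K" "u \<in> T" "0 < l" "l \<le> length u"
      "\<gamma> * sqrt (real l * ln (real n)) \<le> \<bar>real (A_count_l T u l k j) - \<mu> k * real l\<bar>" by blast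
    have pl: "planar_tree T" using T by (simp add: Tr_def)
    have lu: "length u \<le> n" using T kju(4) by (simp add: Tr_def)
    define i where "i = (k, j, length u, l)"
    have iI: "i \<in> I" unfolding i_def I_def using kju lu by (simp add: Suc_leI)
    have Bi: "B i (pairs T u) = 1"
      unfolding B_def f_def i_def hh_def ll_def using kju A_count_l_cnt[OF pl kju(4)] by simp
    have fin_u: "finite {u \<in> T. length u = hh i}" using pl by (simp add: planar_tree_def)
    have "1 \<le> (\<Sum>u\<in>{u \<in> T. length u = hh i}. B i (pairs T u))"
      using member_le_sum[of u "{u \<in> T. length u = hh i}" "\<lambda>u. B i (pairs T u)"] Bnn fin_u kju(4) Bi
      unfolding hh_def i_def by simp
    also have "\<dots> \<le> (\<Sum>i\<in>I. \<Sum>u\<in>{u \<in> T. length u = hh i}. B i (pairs T u))"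
      using iI finI Bnn by (intro member_le_sum sum_nonneg) auto
    finally show "1 \<le> (\<Sum>i\<in>I. \<Sum>u\<in>{u \<in> T. length u = hh i}. B i (pairs T u))" .
  qed
  have "(\<Sum>T\<in>{T\<in>trees_of_size (Suc n). \<exists>k j u l. 1 \<le> j \<and> j \<le> k \<and> k \<le> K \<and> u \<in> T \<and>
               0 < l \<and> l \<le> length u \<and>
               \<bar>real (A_count_l T u l k j) - \<mu> k * real l\<bar>
                 \<ge> \<gamma> * sqrt (real l * ln (real n))}. gw_weight \<mu> T)
      \<le> (\<Sum>i\<in>I. lsum \<mu> K (hh i) (B i))"
    by (rule generic_bound[OF H finI Bnn cover])
  also have "\<dots> \<le> (\<Sum>i\<in>I. 2 * exp (- (\<gamma>\<^sup>2 * ln (real n) / 4)))"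
  proof (rule sum_mono)
    fix i assume iI: "i \<in> I"
    obtain k j h l where i: "i = (k, j, h, l)" by (cases i) auto
    have kh: "k \<le> K" using iI i I_def by auto
    show "lsum \<mu> K (hh i) (B i) \<le> 2 * exp (- (\<gamma>\<^sup>2 * ln (real n) / 4))"
    proof (cases "1 \<le> j \<and> j \<le> k \<and> l \<le> h \<and> 1 \<le> l")
      case True
      have "B i = (\<lambda>s. f i (drop (h - l) s))"
        unfolding B_def i hh_def ll_def using True by auto
      then have "lsum \<mu> K (hh i) (B i) = lsum \<mu> K ((h - l) + l) (\<lambda>s. f i (drop (h - l) s))"
        using True i hh_def by simp
      also have "\<dots> = lsum \<mu> K l (f i)" by (rule lsum_drop[OF F(5)])
      also have "f i = (\<lambda>s. if \<gamma> * sqrt (real l * ln (real n)) \<le> \<bar>real (cnt (k, j) s) - \<mu> k * real l\<bar> then 1 else 0)"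
        unfolding f_def i ll_def by simp
      finally show ?thesis using chernoff_gamma[OF H g n _ _ kh] True by simp
    next
      case False
      then have "B i = (\<lambda>s. 0)" unfolding B_def i hh_def ll_def by auto
      then show ?thesis using lsum_const[OF F(5), of "hh i" 0] by simp
    qed
  qed
  also have "\<dots> = real (card I) * (2 * exp (- (\<gamma>\<^sup>2 * ln (real n) / 4)))" by simp
  also have "card I = (K + 1) * (K + 1) * n * n" unfolding I_def by (simp add: card_cartesian_product algebra_simps)
  finally show ?thesis .
qed


lemma final_arith:
  fixes S Z E c \<gamma> :: real and K n :: nat
  assumes n: "2 \<le> n" and E: "0 < E" and ZE: "E / real (n + 2) ^ (K + 2) \<le> Z"
    and S: "S \<le> real ((K + 1) * (K + 1) * n * n) * (2 * exp (- (\<gamma>\<^sup>2 * ln (real n) / 4)))"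
    and g: "\<gamma>\<^sup>2 = 4 * (c + real K + 5)"
    and nC: "2 * real ((K + 1) * (K + 1)) * 2 ^ (K + 2) / E \<le> real n"
  shows "S / Z \<le> real n powr (- c)"
proof -
  define x where "x = real n"
  have x2: "2 \<le> x" using n x_def by simp
  have x0: "0 < x" using x2 by simp
  define P where "P = x powr (- c)"
  have P0: "0 < P" unfolding P_def using x0 by simp
  have "0 < E / real (n + 2) ^ (K + 2)" using E by simp
  then have Zp: "0 < Z" using ZE by linarith
  have ex: "exp (- (\<gamma>\<^sup>2 * ln x / 4)) = P / x ^ (K + 5)"
  proof -
    have "- (\<gamma>\<^sup>2 * ln x / 4) = (- c) * ln x - real (K + 5) * ln x" using g by (simp add: algebra_simps)
    then have "exp (- (\<gamma>\<^sup>2 * ln x / 4)) = exp ((- c) * ln x) / exp (real (K + 5) * ln x)"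
      by (simp add: exp_diff)
    also have "exp ((- c) * ln x) = P" unfolding P_def powr_def using x0 by simp
    also have "exp (real (K + 5) * ln x) = exp (ln x) ^ (K + 5)" by (rule exp_of_nat_mult)
    also have "exp (ln x) = x" using x0 by simp
    finally show ?thesis .
  qed
  show ?thesis
  proof (cases "S \<le> 0")
    case True
    then have "S / Z \<le> 0" using Zp by (simp add: divide_nonpos_pos)
    moreover have "0 \<le> real n powr (- c)" by simp
    ultimately show ?thesis by linarith
  next
    case False
    then have S0: "0 \<le> S" by simp
    define Q where "Q = real (n + 2) ^ (K + 2)"
    have Q0: "0 < Q" unfolding Q_def by simp
    have EQ: "0 < E / Q" using E Q0 by simp
    have ZE': "E / Q \<le> Z" using ZE Q_def by simp
    have "S / Z \<le> S / (E / Q)" by (rule divide_left_mono[OF ZE' S0]) (use mult_pos_pos[OF Zp EQ] in simp)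
    also have "\<dots> = S * Q / E" by simp
    also have "\<dots> \<le> real ((K + 1) * (K + 1) * n * n) * (2 * (P / x ^ (K + 5))) * Q / E"
      using S ex x_def E Q0 by (intro divide_right_mono mult_right_mono) auto
    also have "\<dots> = (2 * real ((K + 1) * (K + 1)) * (x * x) * Q) * P / (E * x ^ (K + 5))"
      unfolding x_def by (simp add: field_simps)
    also have "\<dots> \<le> (E * x ^ (K + 5)) * P / (E * x ^ (K + 5))"
    proof (intro divide_right_mono mult_right_mono)
      have Qb: "Q \<le> 2 ^ (K + 2) * x ^ (K + 2)"
      proof -
        have "real (n + 2) \<le> 2 * x" using x2 x_def by simp
        then have "Q \<le> (2 * x) ^ (K + 2)" unfolding Q_def by (intro power_mono) auto
        then show ?thesis by (simp add: power_mult_distrib mult.assoc mult.left_commute)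
      qed
      have C: "2 * real ((K + 1) * (K + 1)) * 2 ^ (K + 2) \<le> E * x"
        using nC E x_def by (simp add: divide_le_eq mult.commute)
      have "2 * real ((K + 1) * (K + 1)) * (x * x) * Q \<le> 2 * real ((K + 1) * (K + 1)) * (x * x) * (2 ^ (K + 2) * x ^ (K + 2))"
        using Qb by (intro mult_left_mono) auto
      also have "\<dots> = (2 * real ((K + 1) * (K + 1)) * 2 ^ (K + 2)) * x ^ (K + 4)"
        by (simp add: power_add[symmetric] algebra_simps power2_eq_square numeral_eq_Suc)
      also have "\<dots> \<le> (E * x) * x ^ (K + 4)" using C x0 by (intro mult_right_mono) auto
      also have "\<dots> = E * x ^ (K + 5)" by (simp add: numeral_eq_Suc algebra_simps)
      finally show "2 * real ((K + 1) * (K + 1)) * (x * x) * Q \<le> E * x ^ (K + 5)" .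
    qed (use P0 E x0 in auto)
    also have "\<dots> = P" using E x0 by simp
    finally show ?thesis unfolding P_def x_def .
  qed
qed


lemma final_generic:
  fixes EV :: "real \<Rightarrow> nat \<Rightarrow> nat list set \<Rightarrow> bool"
  assumes E: "0 < E" and ZL: "\<forall>n\<ge>N1. gw_size_prob \<mu> n > 0 \<longrightarrow> E / real (n + 2) ^ (K + 2) \<le> gw_size_prob \<mu> n"
    and bnd: "\<forall>\<gamma>>0. \<forall>n\<ge>2. (\<Sum>T\<in>{T\<in>trees_of_size (Suc n). EV \<gamma> n T}. gw_weight \<mu> T)
        \<le> real ((K + 1) * (K + 1) * n * n) * (2 * exp (- (\<gamma>\<^sup>2 * ln (real n) / 4)))"
  shows "\<forall>c>0. \<exists>\<gamma>>0. \<exists>N. \<forall>n\<ge>N. gw_size_prob \<mu> n > 0 \<longrightarrow> cond_prob \<mu> n (EV \<gamma> n) \<le> real n powr (- c)"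
proof (intro allI impI)
  fix c :: real assume c: "0 < c"
  define \<gamma> where "\<gamma> = 2 * sqrt (c + real K + 5)"
  have g0: "0 < \<gamma>" unfolding \<gamma>_def using c by simp
  have g2: "\<gamma>\<^sup>2 = 4 * (c + real K + 5)" unfolding \<gamma>_def using c by (simp add: power_mult_distrib)
  define C where "C = 2 * real ((K + 1) * (K + 1)) * 2 ^ (K + 2) / E"
  define N where "N = max N1 (max 2 (nat \<lceil>C\<rceil>))"
  have "\<forall>n\<ge>N. gw_size_prob \<mu> n > 0 \<longrightarrow> cond_prob \<mu> n (EV \<gamma> n) \<le> real n powr (- c)"
  proof (intro allI impI)
    fix n assume n: "N \<le> n" and pos: "gw_size_prob \<mu> n > 0"
    have n1: "N1 \<le> n" and n2: "2 \<le> n" and nC: "C \<le> real n" using n unfolding N_def by linarith+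
    have ZE: "E / real (n + 2) ^ (K + 2) \<le> gw_size_prob \<mu> n" using ZL n1 pos by blast
    have S: "(\<Sum>T\<in>{T\<in>trees_of_size (Suc n). EV \<gamma> n T}. gw_weight \<mu> T)
        \<le> real ((K + 1) * (K + 1) * n * n) * (2 * exp (- (\<gamma>\<^sup>2 * ln (real n) / 4)))"
      using bnd g0 n2 by blast
    show "cond_prob \<mu> n (EV \<gamma> n) \<le> real n powr (- c)"
      unfolding cond_prob_def by (rule final_arith[OF n2 E ZE S g2 nC[unfolded C_def]])
  qed
  then show "\<exists>\<gamma>>0. \<exists>N. \<forall>n\<ge>N. gw_size_prob \<mu> n > 0 \<longrightarrow> cond_prob \<mu> n (EV \<gamma> n) \<le> real n powr (- c)"
    using g0 by blast
qed

theorem lemma8: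
  fixes \<mu> :: "nat \<Rightarrow> real" and K :: nat
  assumes "H1 \<mu> K"
  shows "(\<forall>c>0. \<exists>\<gamma>>0. \<exists>N. \<forall>n\<ge>N. gw_size_prob \<mu> n > 0 \<longrightarrow>
            cond_prob \<mu> n (\<lambda>T. \<exists>k j u. 1 \<le> j \<and> j \<le> k \<and> k \<le> K \<and> u \<in> T - {[]} \<and>
               \<bar>real (A_count T u k j) - \<mu> k * real (length u)\<bar>
                 \<ge> \<gamma> * sqrt (real (length u) * ln (real n)))
            \<le> real n powr (- c))
       \<and> (\<forall>c>0. \<exists>\<gamma>>0. \<exists>N. \<forall>n\<ge>N. gw_size_prob \<mu> n > 0 \<longrightarrow>
            cond_prob \<mu> n (\<lambda>T. \<exists>k j u l. 1 \<le> j \<and> j \<le> k \<and> k \<le> K \<and> u \<in> T \<and>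
               0 < l \<and> l \<le> length u \<and>
               \<bar>real (A_count_l T u l k j) - \<mu> k * real l\<bar>
                 \<ge> \<gamma> * sqrt (real l * ln (real n)))
            \<le> real n powr (- c))"
proof -
  obtain E N1 where E: "0 < E" and ZL: "\<forall>n\<ge>N1. gw_size_prob \<mu> n > 0 \<longrightarrow> E / real (n + 2) ^ (K + 2) \<le> gw_size_prob \<mu> n"
    using Z_lb[OF assms] by blast
  have b1: "\<forall>\<gamma>>0. \<forall>n\<ge>2. (\<Sum>T\<in>{T\<in>trees_of_size (Suc n). (\<lambda>\<gamma> n T. \<exists>k j u. 1 \<le> j \<and> j \<le> k \<and> k \<le> K \<and> u \<in> T - {[]} \<and>
               \<bar>real (A_count T u k j) - \<mu> k * real (length u)\<bar>
                 \<ge> \<gamma> * sqrt (real (length u) * ln (real n))) \<gamma> n T}. gw_weight \<mu> T)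
        \<le> real ((K + 1) * (K + 1) * n * n) * (2 * exp (- (\<gamma>\<^sup>2 * ln (real n) / 4)))"
  proof (intro allI impI)
    fix \<gamma> :: real and n :: nat assume g: "0 < \<gamma>" and n: "2 \<le> n"
    have hh: "real ((K + 1) * (K + 1) * n) * (2 * exp (- (\<gamma>\<^sup>2 * ln (real n) / 4)))
        \<le> real ((K + 1) * (K + 1) * n * n) * (2 * exp (- (\<gamma>\<^sup>2 * ln (real n) / 4)))"
    proof (rule mult_right_mono)
      have "(K + 1) * (K + 1) * n * 1 \<le> (K + 1) * (K + 1) * n * n" using n by (intro mult_le_mono2) auto
      then show "real ((K + 1) * (K + 1) * n) \<le> real ((K + 1) * (K + 1) * n * n)" by (simp only: of_nat_le_iff mult_1_right)
    qed simp
    show "(\<Sum>T\<in>{T\<in>trees_of_size (Suc n). (\<lambda>\<gamma> n T. \<exists>k j u. 1 \<le> j \<and> j \<le> k \<and> k \<le> K \<and> u \<in> T - {[]} \<and>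
               \<bar>real (A_count T u k j) - \<mu> k * real (length u)\<bar>
                 \<ge> \<gamma> * sqrt (real (length u) * ln (real n))) \<gamma> n T}. gw_weight \<mu> T)
        \<le> real ((K + 1) * (K + 1) * n * n) * (2 * exp (- (\<gamma>\<^sup>2 * ln (real n) / 4)))"
      by (rule order_trans[OF part1_bound[OF assms g n] hh])
  qed
  have b2: "\<forall>\<gamma>>0. \<forall>n\<ge>2. (\<Sum>T\<in>{T\<in>trees_of_size (Suc n). (\<lambda>\<gamma> n T. \<exists>k j u l. 1 \<le> j \<and> j \<le> k \<and> k \<le> K \<and> u \<in> T \<and>
               0 < l \<and> l \<le> length u \<and>
               \<bar>real (A_count_l T u l k j) - \<mu> k * real l\<bar>
                 \<ge> \<gamma> * sqrt (real l * ln (real n))) \<gamma> n T}. gw_weight \<mu> T)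
        \<le> real ((K + 1) * (K + 1) * n * n) * (2 * exp (- (\<gamma>\<^sup>2 * ln (real n) / 4)))"
    using part2_bound[OF assms] by simp
  show ?thesis
    using final_generic[OF E ZL b1] final_generic[OF E ZL b2] by simp
qed


end
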